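(* Let $\Sigma\subset(0,\infty)$ be an unbounded set of parameters $\sigma$, and for each $\sigma\in\Sigma$ let $N_\sigma$ be a positive integer and $\mu_\sigma\in(0,1)$ be such that $\sigma=\sqrt{N_\sigma\mu_\sigma(1-\mu_\sigma)}$. Put $E_\sigma=N_\sigma\mu_\sigma$, and for real $x$ put $m(\sigma,x)=E_\sigma-\sigma x$ and $n(\sigma,x)=N_\sigma-m(\sigma,x)$. Define (for $\sigma$ large enough) $$b(\sigma,x)=\frac{\Gamma(N_\sigma+1)}{\Gamma(n(\sigma,x)+1)\,\Gamma(m(\sigma,x)+1)}\,\mu_\sigma^{m(\sigma,x)}(1-\mu_\sigma)^{n(\sigma,x)}.$$ Assume that $E_\sigma=\sigma^2+1+O(1/\sigma^2)$ as $\sigma\to\infty$, and let $\alpha>0$ be fixed. Then on the intervals $I_\sigma=[-\sigma^{1-\alpha},\sigma^{1-\alpha}]$, $$b(\sigma,x)-b(\sigma,-x)=\Big(\frac{1}{3\sqrt{2\pi}}x(3-x^2)e^{-x^2/2}\Big)\frac{1}{\sigma^2}+O\Big(\frac{1}{\sigma^3}\Big),$$ where the $O$ is uniform in $x\in I_\sigma$: there exist $C>0$ and $\sigma_0$ such that the error is at most $C/\sigma^3$ in absolute value for all $\sigma\in\Sigma$ with $\sigma>\sigma_0$ and all $x\in I_\sigma$.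
   Context: $b(\sigma,\cdot)$ is the continuous (Gamma-function) interpolation of the binomial mass function with $N_\sigma$ trials and success probability $\mu_\sigma$, evaluated at $m(\sigma,x)$. *)

theory Defs
  imports "HOL-Analysis.Analysis"
begin

definition binom_interp :: "nat \<Rightarrow> real \<Rightarrow> real \<Rightarrow> real" where
  "binom_interp Nn mu m =
     Gamma (real Nn + 1) / (Gamma (real Nn - m + 1) * Gamma (m + 1))
     * mu powr m * (1 - mu) powr (real Nn - m)"

definition bfun :: "(real \<Rightarrow> nat) \<Rightarrow> (real \<Rightarrow> real) \<Rightarrow> real \<Rightarrow> real \<Rightarrow> real" where
  "bfun N mu \<sigma> x = binom_interp (N \<sigma>) (mu \<sigma>) (real (N \<sigma>) * mu \<sigma> - \<sigma> * x)"

end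

theory Submission
  imports Defs "HOL-Real_Asymp.Real_Asymp"
begin


lemma mvt_bound:
  fixes f f' :: "real \<Rightarrow> real"
  assumes f0: "f 0 = 0"
    and der: "\<And>t. \<bar>t\<bar> \<le> \<bar>w\<bar> \<Longrightarrow> DERIV f t :> f' t"
    and bnd: "\<And>t. \<bar>t\<bar> \<le> \<bar>w\<bar> \<Longrightarrow> \<bar>f' t\<bar> \<le> B"
  shows "\<bar>f w\<bar> \<le> B * \<bar>w\<bar>"
proof (cases "w = 0")
  case True thus ?thesis using f0 by simp
next
  case False
  show ?thesis
  proof (cases "w > 0")
    case True
    obtain z where z: "0 < z" "z < w" "f w - f 0 = (w - 0) * f' z"
      using MVT2[of 0 w f f'] True der by fastforce
    have "\<bar>f' z\<bar> \<le> B" using bnd z by auto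
    thus ?thesis using z f0 True by (simp add: abs_mult mult.commute mult_left_mono)
  next
    case False
    hence wn: "w < 0" using \<open>w \<noteq> 0\<close> by simp
    obtain z where z: "w < z" "z < 0" "f 0 - f w = (0 - w) * f' z"
      using MVT2[of w 0 f f'] wn der by fastforce
    have "\<bar>f' z\<bar> \<le> B" using bnd z by auto
    thus ?thesis using z f0 wn by (simp add: abs_mult mult.commute mult_left_mono)
  qed
qed

lemma ln_bound1:
  fixes w :: real assumes "\<bar>w\<bar> \<le> 1/2"
  shows "\<bar>ln (1 + w) - w\<bar> \<le> 2 * w\<^sup>2"
proof -
  have "\<bar>(\<lambda>t. ln (1 + t) - t) w\<bar> \<le> (2 * \<bar>w\<bar>) * \<bar>w\<bar>"
  proof (rule mvt_bound[where f' = "\<lambda>t. 1/(1+t) - 1"])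
    fix t :: real assume t: "\<bar>t\<bar> \<le> \<bar>w\<bar>"
    hence "1 + t > 0" using assms by auto
    thus "((\<lambda>t. ln (1 + t) - t) has_real_derivative 1/(1+t) - 1) (at t)"
      by (auto intro!: derivative_eq_intros)
    have tp: "1 + t \<ge> 1/2" using t assms by auto
    have "1/(1+t) - 1 = - t/(1+t)" using \<open>1+t>0\<close> by (simp add: field_simps)
    also have "\<bar>\<dots>\<bar> = \<bar>t\<bar>/(1+t)" using \<open>1+t>0\<close> by simp
    also have "\<dots> \<le> \<bar>t\<bar>/(1/2)" using tp by (intro divide_left_mono) auto
    also have "\<dots> \<le> 2*\<bar>w\<bar>" using t by simp
    finally show "\<bar>1/(1+t) - 1\<bar> \<le> 2*\<bar>w\<bar>" .
  qed simp
  thus ?thesis by (simp add: power2_eq_square abs_mult_self)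
qed

lemma ln_bound3:
  fixes w :: real assumes "\<bar>w\<bar> \<le> 1/2"
  shows "\<bar>ln (1 + w) - (w - w\<^sup>2/2 + w^3/3)\<bar> \<le> 2 * w^4"
proof -
  have "\<bar>(\<lambda>t. ln (1 + t) - (t - t\<^sup>2/2 + t^3/3)) w\<bar> \<le> (2 * \<bar>w\<bar>^3) * \<bar>w\<bar>"
  proof (rule mvt_bound[where f' = "\<lambda>t. 1/(1+t) - (1 - t + t\<^sup>2)"])
    fix t :: real assume t: "\<bar>t\<bar> \<le> \<bar>w\<bar>"
    hence "1 + t > 0" using assms by auto
    thus "((\<lambda>t. ln (1 + t) - (t - t\<^sup>2/2 + t^3/3)) has_real_derivative 1/(1+t) - (1 - t + t\<^sup>2)) (at t)"
      by (auto intro!: derivative_eq_intros simp: power2_eq_square field_simps)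
    have tp: "1 + t \<ge> 1/2" using t assms by auto
    have "1/(1+t) - (1 - t + t\<^sup>2) = -(t^3)/(1+t)" using \<open>1+t>0\<close> by (simp add: field_simps power2_eq_square power3_eq_cube)
    also have "\<bar>\<dots>\<bar> = \<bar>t\<bar>^3/(1+t)" using \<open>1+t>0\<close> by (simp add: abs_mult power_abs)
    also have "\<dots> \<le> \<bar>t\<bar>^3/(1/2)" using tp by (intro divide_left_mono) auto
    also have "\<dots> \<le> 2*\<bar>w\<bar>^3" using t by (simp add: power_mono)
    finally show "\<bar>1/(1+t) - (1 - t + t\<^sup>2)\<bar> \<le> 2*\<bar>w\<bar>^3" .
  qed simp
  moreover have "\<bar>w\<bar>^3 * \<bar>w\<bar> = w^4"
    by (metis power_Suc2 numeral_3_eq_3 Suc_numeral semiring_norm(2) semiring_norm(8) power_abs abs_of_nonneg zero_le_power_eq_numeral even_numeral abs_power2 power_even_abs_numeral)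
  ultimately show ?thesis by (simp add: mult.assoc)
qed

lemma ln_lower2:
  fixes t :: real assumes "t \<ge> 0" shows "t - t\<^sup>2/2 \<le> ln (1 + t)"
proof -
  have "(\<lambda>t. ln (1 + t) - (t - t\<^sup>2/2)) 0 \<le> (\<lambda>t. ln (1 + t) - (t - t\<^sup>2/2)) t"
  proof (rule DERIV_nonneg_imp_nondecreasing[OF assms])
    fix x :: real assume x: "0 \<le> x" "x \<le> t"
    show "\<exists>y. ((\<lambda>t. ln (1 + t) - (t - t\<^sup>2/2)) has_real_derivative y) (at x) \<and> y \<ge> 0"
      using x by (intro exI[of _ "1/(1+x) - (1 - x)"] conjI)
        (auto intro!: derivative_eq_intros simp: field_simps power2_eq_square)
  qed
  thus ?thesis by simp
qed

lemma ln_upper3: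
  fixes t :: real assumes "t \<ge> 0" shows "ln (1 + t) \<le> t - t\<^sup>2/2 + t^3/3"
proof -
  have "(\<lambda>t. (t - t\<^sup>2/2 + t^3/3) - ln (1 + t)) 0 \<le> (\<lambda>t. (t - t\<^sup>2/2 + t^3/3) - ln (1 + t)) t"
  proof (rule DERIV_nonneg_imp_nondecreasing[OF assms])
    fix x :: real assume x: "0 \<le> x" "x \<le> t"
    show "\<exists>y. ((\<lambda>t. (t - t\<^sup>2/2 + t^3/3) - ln (1 + t)) has_real_derivative y) (at x) \<and> y \<ge> 0"
      using x by (intro exI[of _ "(1 - x + x\<^sup>2) - 1/(1+x)"] conjI)
        (auto intro!: derivative_eq_intros simp: field_simps power2_eq_square power3_eq_cube)
  qed
  thus ?thesis by simp
qed

lemma exp_pow_le: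
  fixes y :: real assumes "y \<ge> 0" shows "y ^ k / fact k \<le> exp y"
proof -
  have s: "summable (\<lambda>n. y ^ n / fact n)" using summable_exp[of y] by (simp add: field_simps)
  have "y ^ k / fact k \<le> (\<Sum>n\<in>{k}. y ^ n / fact n)" by simp
  also have "\<dots> \<le> (\<Sum>n. y ^ n / fact n)"
    by (rule sum_le_suminf[OF s]) (use assms in auto)
  also have "\<dots> = exp y" by (simp add: exp_def inverse_eq_divide scaleR_conv_of_real)
  finally show ?thesis .
qed

lemma exp_lin:
  fixes p :: real assumes "\<bar>p\<bar> \<le> 1" shows "\<bar>exp p - 1\<bar> \<le> 3 * \<bar>p\<bar>"
proof -
  have "\<bar>(\<lambda>t. exp t - 1) p\<bar> \<le> 3 * \<bar>p\<bar>"
  proof (rule mvt_bound[where f' = "\<lambda>t. exp t"])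
    fix t :: real assume t: "\<bar>t\<bar> \<le> \<bar>p\<bar>"
    show "((\<lambda>t. exp t - 1) has_real_derivative exp t) (at t)"
      by (auto intro!: derivative_eq_intros)
    have "exp t \<le> exp 1" using t assms by simp
    also have "\<dots> \<le> 3" using exp_le by simp
    finally show "\<bar>exp t\<bar> \<le> 3" by simp
  qed simp
  thus ?thesis by simp
qed

lemma exp_quad:
  fixes p :: real assumes "\<bar>p\<bar> \<le> 1" shows "\<bar>exp p - 1 - p\<bar> \<le> 3 * p\<^sup>2"
proof -
  have "\<bar>(\<lambda>t. exp t - 1 - t) p\<bar> \<le> (3 * \<bar>p\<bar>) * \<bar>p\<bar>"
  proof (rule mvt_bound[where f' = "\<lambda>t. exp t - 1"])
    fix t :: real assume t: "\<bar>t\<bar> \<le> \<bar>p\<bar>"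
    show "((\<lambda>t. exp t - 1 - t) has_real_derivative exp t - 1) (at t)"
      by (auto intro!: derivative_eq_intros)
    have "\<bar>exp t - 1\<bar> \<le> 3 * \<bar>t\<bar>" using exp_lin[of t] t assms by simp
    thus "\<bar>exp t - 1\<bar> \<le> 3 * \<bar>p\<bar>" using t by linarith
  qed simp
  thus ?thesis by (simp add: power2_eq_square abs_mult_self)
qed



definition Gs :: "real \<Rightarrow> real" where
  "Gs z = ln (Gamma (z + 1)) - ((z + 1/2) * ln z - z)"

lemma lnGamma_step:
  fixes z :: real assumes "z > 0"
  shows "ln (Gamma (z + 2)) = ln (z + 1) + ln (Gamma (z + 1))"
proof -
  have "Gamma (z + 2) = (z + 1) * Gamma (z + 1)"
  proof -
    have "z + 1 \<notin> \<int>\<^sub>\<le>\<^sub>0" using assms by (auto elim!: nonpos_Ints_cases)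
    thus ?thesis using Gamma_plus1[of "z+1"] by (simp add: add.assoc)
  qed
  moreover have g: "Gamma (z+1) > 0" using assms by (intro Gamma_real_pos) simp
  ultimately show ?thesis using assms ln_mult[of "z+1" "Gamma (z+1)"] by (simp add: less_imp_neq[OF g, symmetric])
qed

lemma Gs_step:
  fixes z :: real assumes "z \<ge> 1"
  shows "\<bar>Gs z - Gs (z + 1)\<bar> \<le> 1 / z\<^sup>2"
proof -
  have z0: "z > 0" using assms by simp
  have "Gs z - Gs (z + 1) = (z + 1/2) * (ln (z + 1) - ln z) - 1"
    unfolding Gs_def using lnGamma_step[OF z0] by (simp add: algebra_simps add.assoc)
  also have "ln (z + 1) - ln z = ln (1 + 1/z)"
  proof -
    have "1 + 1/z = (z+1)/z" using z0 by (simp add: field_simps)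
    thus ?thesis using z0 by (simp add: ln_div)
  qed
  finally have eq: "Gs z - Gs (z + 1) = (z + 1/2) * ln (1 + 1/z) - 1" .
  define t where "t = 1/z"
  have t0: "t > 0" using z0 by (simp add: t_def)
  have zt: "z = 1/t" using z0 by (simp add: t_def)
  have t1: "t \<le> 1" using assms by (simp add: t_def)
  have lo: "t - t\<^sup>2/2 \<le> ln (1 + t)" using ln_lower2 t0 by simp
  have hi: "ln (1 + t) \<le> t - t\<^sup>2/2 + t^3/3" using ln_upper3 t0 by simp
  have zp: "z + 1/2 > 0" using z0 by simp
  have "(z + 1/2) * ln (1 + t) - 1 \<le> (z + 1/2) * (t - t\<^sup>2/2 + t^3/3) - 1"
    using mult_left_mono[OF hi, of "z+1/2"] zp by simp
  also have "\<dots> = t\<^sup>2/12 + t^3/6" unfolding zt using t0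
    by (simp add: field_simps power2_eq_square power3_eq_cube)
  also have "\<dots> \<le> t\<^sup>2"
  proof -
    have "t^3 \<le> t^2" using power_decreasing[of 2 3 t] t0 t1 by simp
    thus ?thesis using zero_le_power2[of t] by linarith
  qed
  finally have u: "(z + 1/2) * ln (1 + t) - 1 \<le> t\<^sup>2" .
  have "(z + 1/2) * (t - t\<^sup>2/2) - 1 \<le> (z + 1/2) * ln (1 + t) - 1"
    using mult_left_mono[OF lo, of "z+1/2"] zp by simp
  moreover have "(z + 1/2) * (t - t\<^sup>2/2) - 1 = - t\<^sup>2/4" unfolding zt using t0
    by (simp add: field_simps power2_eq_square)
  ultimately have l: "- t\<^sup>2 \<le> (z + 1/2) * ln (1 + t) - 1"
    using zero_le_power2[of t] by linarith
  have "t\<^sup>2 = 1/z\<^sup>2" by (simp add: t_def power_divide)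
  thus ?thesis using eq u l by (simp add: t_def abs_le_iff)
qed

lemma Gs_telescope:
  fixes z :: real assumes "z \<ge> 1"
  shows "\<bar>Gs z - Gs (z + real k)\<bar> \<le> 2/z - 2/(z + real k)"
proof (induction k)
  case 0 thus ?case by simp
next
  case (Suc k)
  define y where "y = z + real k"
  have y1: "y \<ge> 1" using assms by (simp add: y_def)
  have st: "\<bar>Gs y - Gs (y + 1)\<bar> \<le> 1/y\<^sup>2" using Gs_step[OF y1] .
  have yp: "y > 0" using y1 by simp
  have yq: "y + 1 > 0" "y + y * y > 0" using yp by (auto simp: add_pos_pos)
  have e1: "2/y * (y\<^sup>2*(y+1)) = 2*y*(y+1)" using yp by (simp add: power2_eq_square)
  have e2: "2/(y+1) * (y\<^sup>2*(y+1)) = 2*y\<^sup>2" using yq by simp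
  have e3: "1/y\<^sup>2 * (y\<^sup>2*(y+1)) = y+1" using yp by simp
  have "(2/y - 2/(y+1) - 1/y\<^sup>2) * (y\<^sup>2*(y+1)) = y - 1"
    unfolding left_diff_distrib e1 e2 e3 by (simp add: algebra_simps power2_eq_square)
  moreover have "y\<^sup>2*(y+1) > 0" using yp by simp
  ultimately have "2/y - 2/(y+1) - 1/y\<^sup>2 \<ge> 0" using y1
    by (metis diff_ge_0_iff_ge zero_le_mult_iff not_less)
  hence "1/y\<^sup>2 \<le> 2/y - 2/(y+1)" by linarith
  moreover have IH: "\<bar>Gs z - Gs y\<bar> \<le> 2/z - 2/y" using Suc.IH by (simp add: y_def)
  ultimately have "\<bar>Gs z - Gs (y+1)\<bar> \<le> 2/z - 2/(y+1)" using st by linarith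
  moreover have e: "z + real (Suc k) = y + 1" by (simp add: y_def)
  ultimately show ?case by (simp only: e)
qed

lemma Gs_shift_lim:
  fixes z :: real assumes z0: "z > 0"
  shows "(\<lambda>n. Gs (z + real n) - Gs (real n)) \<longlonglongrightarrow> 0"
proof -
  have zn: "z \<notin> \<int>\<^sub>\<le>\<^sub>0" using z0 by (auto elim!: nonpos_Ints_cases)
  have g: "Gamma z > 0" using z0 by simp
  have "(\<lambda>n. Gamma_series z n / Gamma z) \<longlonglongrightarrow> Gamma z / Gamma z"
    by (intro tendsto_intros) (use g in auto)
  hence "(\<lambda>n. ln (Gamma_series z n / Gamma z)) \<longlonglongrightarrow> ln 1"
    using g by (intro tendsto_ln) auto
  hence A: "(\<lambda>n. ln (Gamma_series z n / Gamma z)) \<longlonglongrightarrow> 0" by simp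
  have B: "(\<lambda>n::nat. z * ln n - (z + n + 1/2) * ln (z + n) + (n + 1/2) * ln n + z) \<longlonglongrightarrow> 0"
    using z0 by real_asymp
  have ev: "eventually (\<lambda>n. - ln (Gamma_series z n / Gamma z) + (z * ln n - (z + n + 1/2) * ln (z + n) + (n + 1/2) * ln n + z) = Gs (z + real n) - Gs (real n)) sequentially"
    using eventually_ge_at_top[of "1::nat"]
  proof eventually_elim
    case (elim n)
    have n0: "real n > 0" using elim by simp
    have p: "pochhammer z (n+1) = Gamma (z + real n + 1) / Gamma z"
      using pochhammer_Gamma[OF zn, of "n+1"] by (simp add: add_ac)
    have gp: "Gamma (z + real n + 1) > 0" using z0 by simp
    have "Gamma_series z n / Gamma z = fact n * exp (z * ln (real n)) / Gamma (z + real n + 1)"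
      unfolding Gamma_series_def p using g gp by (simp add: field_simps)
    hence "ln (Gamma_series z n / Gamma z) = ln (fact n) + z * ln (real n) - ln (Gamma (z + real n + 1))"
      using gp by (simp add: ln_div ln_mult)
    moreover have "Gamma (real n + 1) = fact n" using Gamma_fact[of n, where 'a=real] by (simp add: add.commute)
    ultimately show ?case unfolding Gs_def by (simp add: algebra_simps)
  qed
  have "(\<lambda>n. - ln (Gamma_series z n / Gamma z) + (z * ln n - (z + n + 1/2) * ln (z + n) + (n + 1/2) * ln n + z)) \<longlonglongrightarrow> - 0 + 0"
    by (intro tendsto_add tendsto_minus A B)
  thus ?thesis using tendsto_cong[OF ev] by simp
qed



lemma Gamma_dup_real:
  fixes z :: real assumes z: "z > 0"
  shows "Gamma z * Gamma (z + 1/2) = exp ((1 - 2*z) * ln 2) * sqrt pi * Gamma (2*z)"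
proof -
  have a: "complex_of_real z \<notin> \<int>\<^sub>\<le>\<^sub>0" using z
    by (auto elim!: nonpos_Ints_cases simp: complex_eq_iff)
  have b: "complex_of_real z + 1/2 \<notin> \<int>\<^sub>\<le>\<^sub>0" using z
    by (auto elim!: nonpos_Ints_cases simp: complex_eq_iff)
  have "complex_of_real (Gamma z * Gamma (z + 1/2)) = complex_of_real (exp ((1 - 2*z) * ln 2) * sqrt pi * Gamma (2*z))"
    using Gamma_legendre_duplication[OF a b] by (simp add: Gamma_complex_of_real[symmetric] exp_of_real[symmetric])
  thus ?thesis by (simp only: of_real_eq_iff)
qed

lemma Gs_nat_lim: "(\<lambda>n. Gs (real n)) \<longlonglongrightarrow> (ln 2 + ln pi) / 2"
proof -
  define D where "D n = -(2*real n+1)*ln 2 + ln pi / 2 - ((real n+1/2)*ln n - n + (n+1)*ln(n+1/2) - n - 1/2 - (2*n+3/2)*ln(2*n+1) + 2*n+1)" for n :: nat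
  have D: "D \<longlonglongrightarrow> (ln 2 + ln pi) / 2" unfolding D_def by real_asymp
  have h: "(\<lambda>n. Gs (1/2 + real n) - Gs (real n)) \<longlonglongrightarrow> 0" by (rule Gs_shift_lim) simp
  have k: "(\<lambda>n. Gs (real n + real (Suc n)) - Gs (real n)) \<longlonglongrightarrow> 0"
  proof -
    have "(\<lambda>n::nat. 2 / real n) \<longlonglongrightarrow> 0" by real_asymp
    moreover have "eventually (\<lambda>n. \<bar>Gs (real n + real (Suc n)) - Gs (real n)\<bar> \<le> 2 / real n) sequentially"
      using eventually_ge_at_top[of "1::nat"]
    proof eventually_elim
      case (elim n)
      hence "real n \<ge> 1" by simp
      from Gs_telescope[OF this, of "Suc n"] have "\<bar>Gs (real n) - Gs (real n + real (Suc n))\<bar> \<le> 2 / real n"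
        by (smt (verit) divide_nonneg_nonneg of_nat_0_le_iff)
      thus ?case by (simp add: abs_minus_commute)
    qed
    ultimately show ?thesis
      using Lim_null_comparison[of "\<lambda>n. Gs (real n + real (Suc n)) - Gs (real n)" "\<lambda>n. 2 / real n" sequentially] by simp
  qed
  have ev: "eventually (\<lambda>n. D n - (Gs (1/2 + real n) - Gs (real n)) + (Gs (real n + real (Suc n)) - Gs (real n)) = Gs (real n)) sequentially"
    using eventually_ge_at_top[of "1::nat"]
  proof eventually_elim
    case (elim n)
    have n0: "real n > 0" using elim by simp
    have dup: "Gamma (real n + 1) * Gamma (real n + 1 + 1/2) = exp ((1 - 2*(real n + 1)) * ln 2) * sqrt pi * Gamma (2*(real n + 1))"
      by (rule Gamma_dup_real) simp
    have p1: "Gamma (real n + 1) > 0" "Gamma (real n + 1 + 1/2) > 0" "Gamma (2*(real n+1)) > 0"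
      by (auto intro!: Gamma_real_pos)
    have "ln (Gamma (real n + 1)) + ln (Gamma (real n + 1 + 1/2)) = (1 - 2*(real n + 1)) * ln 2 + ln pi / 2 + ln (Gamma (2*(real n + 1)))"
    proof -
      have "ln (Gamma (real n + 1) * Gamma (real n + 1 + 1/2)) = ln (Gamma (real n + 1)) + ln (Gamma (real n + 1 + 1/2))"
        by (rule ln_mult_pos) (use p1 in auto)
      moreover have "ln (exp ((1 - 2*(real n + 1)) * ln 2) * sqrt pi * Gamma (2*(real n + 1))) = ln (exp ((1 - 2*(real n + 1)) * ln 2) * sqrt pi) + ln (Gamma (2*(real n + 1)))"
        by (rule ln_mult_pos) (use p1 in auto)
      moreover have "ln (exp ((1 - 2*(real n + 1)) * ln 2) * sqrt pi) = (1 - 2*(real n + 1)) * ln 2 + ln pi / 2"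
        by (simp add: ln_mult ln_sqrt)
      ultimately show ?thesis using dup by simp
    qed
    moreover have "1/2 + real n + 1 = real n + 1 + 1/2" by simp
    moreover have "real n + real (Suc n) + 1 = 2 * (real n + 1)" by simp
    moreover have "1/2 + real n = real n + 1/2" by simp
    moreover have "real n + real (Suc n) = 2 * real n + 1" by simp
    ultimately show ?case unfolding Gs_def D_def by (simp add: algebra_simps)
  qed
  have "(\<lambda>n. D n - (Gs (1/2 + real n) - Gs (real n)) + (Gs (real n + real (Suc n)) - Gs (real n))) \<longlonglongrightarrow> (ln 2 + ln pi) / 2 - 0 + 0"
    by (intro tendsto_add tendsto_diff D h k)
  thus ?thesis using tendsto_cong[OF ev] by simp
qed

lemma stirling_bound:
  fixes z :: real assumes z: "z \<ge> 1"
  shows "\<bar>ln (Gamma (z + 1)) - ((z + 1/2) * ln z - z + ln (2*pi) / 2)\<bar> \<le> 2 / z"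
proof -
  have l: "(\<lambda>n. (Gs (z + real n) - Gs (real n)) + Gs (real n)) \<longlonglongrightarrow> 0 + (ln 2 + ln pi) / 2"
    by (intro tendsto_add Gs_shift_lim Gs_nat_lim) (use z in simp)
  hence "(\<lambda>n. \<bar>Gs z - Gs (z + real n)\<bar>) \<longlonglongrightarrow> \<bar>Gs z - (ln 2 + ln pi) / 2\<bar>"
    by (intro tendsto_intros) simp
  moreover have "\<forall>n. \<bar>Gs z - Gs (z + real n)\<bar> \<le> 2 / z"
  proof
    fix n
    have "2 / (z + real n) \<ge> 0" using z by simp
    thus "\<bar>Gs z - Gs (z + real n)\<bar> \<le> 2 / z" using Gs_telescope[OF z, of n] by linarith
  qed
  ultimately have "\<bar>Gs z - (ln 2 + ln pi) / 2\<bar> \<le> 2 / z"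
    by (intro LIMSEQ_le_const2) auto
  moreover have "ln (2*pi) = ln 2 + ln pi" by (simp add: ln_mult)
  ultimately show ?thesis unfolding Gs_def by (simp add: algebra_simps)
qed



lemma div_le_aux: "0 < b \<Longrightarrow> b \<le> a \<Longrightarrow> (c::real) \<ge> 0 \<Longrightarrow> c / a \<le> c / b"
  by (rule divide_left_mono) auto

lemma dec:
  fixes s mu x :: real and Nn :: nat
  assumes s2: "s \<ge> 2" and mu0: "0 < mu" and mu1: "mu < 1"
    and sig: "s\<^sup>2 = real Nn * mu * (1 - mu)"
    and eps: "\<bar>real Nn * mu - s\<^sup>2 - 1\<bar> \<le> 1/4"
    and xs: "4 * (s * \<bar>x\<bar>) \<le> real Nn * mu"
  shows "\<exists>\<rho>. \<bar>\<rho>\<bar> \<le> 8 / s\<^sup>2 \<and>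
     binom_interp Nn mu (real Nn * mu - s * x) =
       exp (- (real Nn * mu - s * x + 1/2) * ln (1 - s * x / (real Nn * mu))
            - (real Nn - real Nn * mu + s * x + 1/2) * ln (1 + s * x / (real Nn - real Nn * mu)) + \<rho>)
       / (s * sqrt (2 * pi))"
proof -
  define Nr where "Nr = real Nn"
  define E where "E = Nr * mu"
  define F where "F = Nr - Nr * mu"
  define q where "q = 1 - mu"
  define m where "m = E - s * x"
  define n where "n = F + s * x"
  define l1 where "l1 = ln (1 - s * x / E)"
  define l2 where "l2 = ln (1 + s * x / F)"
  have s0: "s > 0" using s2 by simp
  have q0: "q > 0" using mu1 by (simp add: q_def)
  have sig': "s\<^sup>2 = E * q" using sig by (simp add: E_def q_def Nr_def)
  have Eq: "E - s\<^sup>2 = E * mu" using sig' by (simp add: q_def algebra_simps)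
  have E1: "E \<ge> s\<^sup>2 + 3/4" "E \<le> s\<^sup>2 + 5/4" using eps unfolding abs_le_iff E_def Nr_def by linarith+
  have "(2::real)^2 \<le> s^2" by (rule power_mono) (use s2 in auto)
  hence s4: "s\<^sup>2 \<ge> 4" by simp
  have Epos: "E > 0" using E1 s4 by simp
  have Nr0: "Nr > 0" using Epos mu0 by (simp add: E_def zero_less_mult_iff)
  have Fq: "F = Nr * q" by (simp add: F_def q_def algebra_simps)
  have Fmu: "F * mu = s\<^sup>2" using sig by (simp add: Fq q_def Nr_def algebra_simps)
  have Emu: "E * mu \<le> 5/4" using Eq E1 by simp
  have F0: "F > 0" using Fq Nr0 q0 by simp
  have Fbig: "F * (5/4) \<ge> s\<^sup>2 * E"
  proof -
    have "F * (E * mu) = s\<^sup>2 * E" using Fmu by (simp add: algebra_simps)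
    thus ?thesis using Emu F0 by (metis mult_left_mono less_imp_le)
  qed
  have sxE: "\<bar>s * x\<bar> \<le> E / 4" using xs s0 by (simp add: E_def Nr_def abs_mult)
  have m1: "m \<ge> 3 * E / 4" using sxE by (simp add: m_def abs_le_iff)
  have "s\<^sup>2 * E \<ge> 4 * E" using s4 Epos by simp
  hence F4E: "F \<ge> 3 * E" using Fbig Epos by linarith
  have n1: "n \<ge> 3 * E / 4" using sxE F4E by (simp add: n_def abs_le_iff)
  have Em: "3 * E / 4 \<ge> 3 * s\<^sup>2 / 4" using E1 by simp
  have mp: "m \<ge> 1" "n \<ge> 1" using m1 n1 Em s4 by linarith+
  have Nmn: "Nr = m + n" by (simp add: m_def n_def E_def F_def)
  have Np: "Nr \<ge> 1" using Nmn mp by linarith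
  define c where "c = ln (2*pi) / 2"
  define r where "r z = ln (Gamma (z + 1)) - ((z + 1/2) * ln z - z + c)" for z
  have rb: "\<bar>r z\<bar> \<le> 2 / z" if "z \<ge> 1" for z unfolding r_def c_def using stirling_bound[OF that] .
  have lm: "ln m = ln E + l1"
  proof -
    have "m = E * (1 - s * x / E)" using Epos by (simp add: m_def field_simps)
    moreover have "1 - s * x / E > 0" using sxE Epos by (auto simp: abs_le_iff field_simps)
    ultimately show ?thesis unfolding l1_def using Epos by (simp add: ln_mult_pos)
  qed
  have ln': "ln n = ln F + l2"
  proof -
    have "n = F * (1 + s * x / F)" using F0 by (simp add: n_def field_simps)
    moreover have "1 + s * x / F > 0" using sxE F4E F0 Epos by (auto simp: abs_le_iff field_simps)
    ultimately show ?thesis unfolding l2_def using F0 by (simp add: ln_mult_pos)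
  qed
  have lE: "ln E = ln Nr + ln mu" unfolding E_def using Nr0 mu0 by (simp add: ln_mult_pos)
  have lF: "ln F = ln Nr + ln q" unfolding Fq using Nr0 q0 by (simp add: ln_mult_pos)
  have ls: "2 * ln s = ln Nr + ln mu + ln q"
  proof -
    have "ln (s\<^sup>2) = 2 * ln s" using s0 by (simp add: ln_realpow)
    moreover have "s\<^sup>2 = Nr * mu * q" using sig by (simp add: Nr_def q_def)
    ultimately show ?thesis using Nr0 mu0 q0 by (simp add: ln_mult_pos)
  qed
  define b where "b = binom_interp Nn mu m"
  have bdef: "b = Gamma (Nr + 1) / (Gamma (n + 1) * Gamma (m + 1)) * mu powr m * q powr n"
    unfolding b_def binom_interp_def using Nmn by (simp add: Nr_def q_def)
  have gp: "Gamma (Nr + 1) > 0" "Gamma (n + 1) > 0" "Gamma (m + 1) > 0" using Np mp by auto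
  have bpos: "b > 0" unfolding bdef using gp mu0 q0 by simp
  have lb: "ln b = ln (Gamma (Nr + 1)) - ln (Gamma (n + 1)) - ln (Gamma (m + 1)) + m * ln mu + n * ln q"
    unfolding bdef using gp mu0 q0
    by (simp add: ln_mult_pos ln_div ln_powr)
  define \<rho> where "\<rho> = r Nr - r n - r m"
  have rho: "\<bar>\<rho>\<bar> \<le> 8 / s\<^sup>2"
  proof -
    have a: "\<bar>r Nr\<bar> \<le> 2 / Nr" "\<bar>r n\<bar> \<le> 2 / n" "\<bar>r m\<bar> \<le> 2 / m" using rb Np mp by auto
    have L: "Nr \<ge> 3 * s\<^sup>2 / 4" "n \<ge> 3 * s\<^sup>2 / 4" "m \<ge> 3 * s\<^sup>2 / 4" using Nmn m1 n1 Em mp by linarith+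
    have L0: "3 * s\<^sup>2 / 4 > 0" using s0 by simp
    have "2 / Nr \<le> 2 / (3 * s\<^sup>2 / 4)" "2 / n \<le> 2 / (3 * s\<^sup>2 / 4)" "2 / m \<le> 2 / (3 * s\<^sup>2 / 4)"
      using div_le_aux[OF L0 L(1), of 2] div_le_aux[OF L0 L(2), of 2] div_le_aux[OF L0 L(3), of 2] by auto
    note bb = this
    have "\<bar>r Nr - r n - r m\<bar> \<le> \<bar>r Nr\<bar> + \<bar>r n\<bar> + \<bar>r m\<bar>" by linarith
    also have "\<dots> \<le> 3 * (2 / (3 * s\<^sup>2 / 4))" using a bb by linarith
    also have "\<dots> = 8 / s\<^sup>2" by simp
    finally show ?thesis unfolding \<rho>_def .
  qed
  have key: "ln b = - c - ln s + (- (m + 1/2) * l1 - (n + 1/2) * l2 + \<rho>)"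
  proof -
    have "ln b = ((Nr + 1/2) * ln Nr - Nr + c + r Nr) - ((n + 1/2) * ln n - n + c + r n)
                 - ((m + 1/2) * ln m - m + c + r m) + m * ln mu + n * ln q"
      unfolding lb r_def by simp
    also have "\<dots> = ((m + n + 1/2) * ln Nr - (m+n) + c + r Nr) - ((n + 1/2) * (ln Nr + ln q + l2) - n + c + r n)
                 - ((m + 1/2) * (ln Nr + ln mu + l1) - m + c + r m) + m * ln mu + n * ln q"
      unfolding lm ln' lE lF Nmn by simp
    also have "\<dots> = - c - (ln Nr + ln mu + ln q) / 2 + (- (m + 1/2) * l1 - (n + 1/2) * l2 + \<rho>)"
      unfolding \<rho>_def by (simp add: algebra_simps add_divide_distrib)
    also have "(ln Nr + ln mu + ln q) / 2 = ln s" using ls by simp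
    finally show ?thesis .
  qed
  have "b = exp (ln b)" using bpos by simp
  also have "\<dots> = exp (- (m + 1/2) * l1 - (n + 1/2) * l2 + \<rho>) * (exp (- c) * exp (- ln s))"
    unfolding key by (simp add: exp_add[symmetric] exp_diff algebra_simps)
  also have "exp (- c) = 1 / sqrt (2 * pi)"
  proof -
    have "sqrt (2*pi) = exp (ln (2*pi) / 2)"
      by (simp add: exp_ln_iff ln_sqrt[symmetric] exp_ln)
    thus ?thesis unfolding c_def by (simp add: exp_minus field_simps)
  qed
  also have "exp (- ln s) = 1 / s" using s0 by (simp add: exp_minus inverse_eq_divide)
  finally have "b = exp (- (m + 1/2) * l1 - (n + 1/2) * l2 + \<rho>) / (s * sqrt (2 * pi))" by simp
  thus ?thesis using rho unfolding b_def m_def n_def l1_def l2_def E_def F_def Nr_def by blast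
qed



lemma abs_mult_le: "\<bar>a\<bar> \<le> A \<Longrightarrow> \<bar>b\<bar> \<le> B \<Longrightarrow> \<bar>a * b\<bar> \<le> A * (B::real)"
  by (simp add: abs_mult mult_mono')

lemma mono_Xh:
  fixes X h :: real
  assumes "1 \<le> X" "0 \<le> h" "h \<le> 1" "i \<le> 4" "2 \<le> j"
  shows "X^i * h^j \<le> X^4 * h^2"
proof (rule mult_mono)
  show "X^i \<le> X^4" using assms by (intro power_increasing) auto
  show "h^j \<le> h^2" using assms by (intro power_decreasing) auto
qed (use assms in auto)

lemma modr:
  fixes s mu x :: real and Nn :: nat
  assumes s2: "s \<ge> 16" and mu0: "0 < mu" and mu1: "mu < 1"
    and sig: "s\<^sup>2 = real Nn * mu * (1 - mu)"
    and eps: "\<bar>real Nn * mu - s\<^sup>2 - 1\<bar> \<le> 1/4"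
    and X8: "(1 + \<bar>x\<bar>)^8 \<le> s"
  shows "\<exists>R. \<bar>R\<bar> \<le> 30 * (1 + \<bar>x\<bar>)^4 / s\<^sup>2 \<and>
     binom_interp Nn mu (real Nn * mu - s * x) =
       exp (- x\<^sup>2 / 2) * exp ((x/2 - x^3/6) / s + R) / (s * sqrt (2 * pi))"
proof -
  define X where "X = 1 + \<bar>x\<bar>"
  define h where "h = 1 / s"
  define E where "E = real Nn * mu"
  define F where "F = real Nn - real Nn * mu"
  have s0: "s > 0" using s2 by simp
  have X1: "X \<ge> 1" and xX: "\<bar>x\<bar> \<le> X" by (auto simp: X_def)
  have h0: "h > 0" and h1: "h \<le> 1" using s2 by (auto simp: h_def)
  have sh: "s * h = 1" using s0 by (simp add: h_def)
  have "(2::real)^2 \<le> s^2" by (rule power_mono) (use s2 in auto)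
  hence s4: "s\<^sup>2 \<ge> 4" by simp
  have E1: "E \<ge> s\<^sup>2 + 3/4" "E \<le> s\<^sup>2 + 5/4" using eps unfolding abs_le_iff E_def by linarith+
  have Epos: "E > 0" using E1 s4 by simp
  have Eq: "E - s\<^sup>2 = E * mu" using sig by (simp add: E_def algebra_simps)
  have Fmu: "F * mu = s\<^sup>2" using sig by (simp add: F_def algebra_simps)
  have Emu: "E * mu \<le> 5/4" using Eq E1 by simp
  have F0: "F > 0" using mu0 mu1 Epos by (simp add: F_def E_def zero_less_mult_iff algebra_simps) 
  have Fbig: "F * (5/4) \<ge> s\<^sup>2 * E"
  proof -
    have "F * (E * mu) = s\<^sup>2 * E" using Fmu by (simp add: algebra_simps)
    thus ?thesis using Emu F0 by (metis mult_left_mono less_imp_le)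
  qed
  have x4: "4 * X \<le> s"
  proof -
    have "(4 * X)^8 = 4^8 * X^8" by (simp add: power_mult_distrib)
    also have "\<dots> \<le> 4^8 * s" using X8 by (simp add: X_def)
    also have "\<dots> \<le> s^8"
    proof -
      have "(16::real)^7 \<le> s^7" by (rule power_mono) (use s2 in auto)
      hence "4^8 \<le> s^7" by simp
      hence "4^8 * s \<le> s^7 * s" using s0 by simp
      thus ?thesis by (simp add: power_Suc2[symmetric] del: power_Suc2)
    qed
    finally have f: "(4 * X)^8 \<le> s^8" .
    show ?thesis using power_le_imp_le_base[of "4*X" 7 s] f s0 by simp
  qed
  have xs: "4 * (s * \<bar>x\<bar>) \<le> real Nn * mu"
  proof -
    have "4 * (s * \<bar>x\<bar>) \<le> s * s" using x4 xX s0 by (simp add: mult_left_mono)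
    also have "\<dots> \<le> E" using E1 by (simp add: power2_eq_square)
    finally show ?thesis by (simp add: E_def)
  qed
  obtain \<rho> where rho: "\<bar>\<rho>\<bar> \<le> 8 / s\<^sup>2" and bq:
    "binom_interp Nn mu (real Nn * mu - s * x) =
       exp (- (E - s * x + 1/2) * ln (1 - s * x / E)
            - (F + s * x + 1/2) * ln (1 + s * x / F) + \<rho>) / (s * sqrt (2 * pi))"
    using dec[OF _ mu0 mu1 sig eps xs] s2 unfolding E_def F_def by force
  define y where "y = s * x"
  define u where "u = y / E"
  define v where "v = y / F"
  define l1 where "l1 = ln (1 - u)"
  define l2 where "l2 = ln (1 + v)"
  define P where "P = x\<^sup>2 / 2 - (E - y + 1/2) * l1 - (F + y + 1/2) * l2 + \<rho>"
  define R where "R = P - (x/2 - x^3/6) / s"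
  have b: "binom_interp Nn mu (real Nn * mu - s * x) = exp (- x\<^sup>2 / 2) * exp ((x/2 - x^3/6) / s + R) / (s * sqrt (2 * pi))"
    unfolding bq R_def P_def l1_def l2_def u_def v_def y_def by (simp add: exp_add[symmetric]) (simp add: algebra_simps)
  have Eu: "E * u = y" and Fv: "F * v = y" using Epos F0 by (auto simp: u_def v_def)
  have EFs: "(E + F) * s\<^sup>2 = E * F"
  proof -
    have "E + F = real Nn" by (simp add: E_def F_def)
    moreover have "E * F = real Nn * (real Nn * mu * (1 - mu))" unfolding E_def F_def by (simp add: algebra_simps)
    hence "E * F = real Nn * s\<^sup>2" using sig by simp
    ultimately show ?thesis by simp
  qed
  have yuv: "y * (u + v) = x\<^sup>2"
  proof -
    have "y * (u + v) = y * y * (E + F) / (E * F)" using Epos F0 by (simp add: u_def v_def field_simps)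
    also have "\<dots> = y * y * (E + F) / ((E + F) * s\<^sup>2)" using EFs by simp
    also have "\<dots> = y * y / s\<^sup>2" using Epos F0 by simp
    also have "\<dots> = x\<^sup>2" using s0 by (simp add: y_def power2_eq_square)
    finally show ?thesis .
  qed
  define e1 where "e1 = l1 - (- u - u\<^sup>2/2 - u^3/3)"
  define e2 where "e2 = l2 - (v - v\<^sup>2/2 + v^3/3)"
  define e3 where "e3 = l1 + u"
  define e4 where "e4 = l2 - v"
  define \<zeta> where "\<zeta> = s\<^sup>2 / E"
  have ident: "R = (u/2 - x*h/2) - (y * u\<^sup>2 / 6 - x^3 * h / 6) + y * v\<^sup>2 / 6 - y * (u^3 + v^3) / 3
      - E * (1 - u) * e1 - F * (1 + v) * e2 - e3 / 2 - v / 2 - e4 / 2 + \<rho>"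
  proof -
    have i1: "E * (1 - u) * l1 = - y * (1 - u/2 - u\<^sup>2/6 - u^3/3) + E * (1 - u) * e1"
      unfolding e1_def Eu[symmetric] by (simp add: field_simps power2_eq_square power3_eq_cube)
    have i2: "F * (1 + v) * l2 = y * (1 + v/2 - v\<^sup>2/6 + v^3/3) + F * (1 + v) * e2"
      unfolding e2_def Fv[symmetric] by (simp add: field_simps power2_eq_square power3_eq_cube)
    have l1e: "l1 = e3 - u" and l2e: "l2 = e4 + v" by (simp_all add: e3_def e4_def)
    have "R = x\<^sup>2 / 2 - (E * (1 - u) * l1 + l1 / 2) - (F * (1 + v) * l2 + l2 / 2) + \<rho> - (x/2 - x^3/6) * h"
      unfolding R_def P_def h_def using Eu Fv s0 by (simp add: algebra_simps) (simp add: field_simps)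
    also have "\<dots> = y * (u + v) / 2 - (- y * (1 - u/2 - u\<^sup>2/6 - u^3/3) + E * (1 - u) * e1 + (e3 - u) / 2)
         - (y * (1 + v/2 - v\<^sup>2/6 + v^3/3) + F * (1 + v) * e2 + (e4 + v) / 2) + \<rho> - (x/2 - x^3/6) * h"
      unfolding i1 i2 yuv by (simp add: l1e l2e)
    finally show ?thesis by (simp add: field_simps)
  qed
  have h0': "h \<ge> 0" using h0 by simp
  have hs: "h \<le> 1/16" using s2 by (simp add: h_def field_simps)
  have xh: "\<bar>x\<bar> * h \<le> 1/4"
  proof -
    have "4 * \<bar>x\<bar> \<le> s" using x4 xX by linarith
    thus ?thesis using s0 by (simp add: h_def field_simps)
  qed
  have hsq: "h\<^sup>2 = 1 / s\<^sup>2" by (simp add: h_def power_divide)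
  have uz: "u = x * h * \<zeta>" using s0 Epos by (simp add: u_def y_def h_def \<zeta>_def field_simps power2_eq_square)
  have z0: "\<zeta> \<ge> 0" "\<zeta> \<le> 1" using E1 Epos by (auto simp: \<zeta>_def field_simps)
  have z1: "\<bar>\<zeta> - 1\<bar> \<le> 5/4 * h\<^sup>2"
  proof -
    have "\<zeta> - 1 = (s\<^sup>2 - E) / E" using Epos by (simp add: \<zeta>_def field_simps)
    hence "\<bar>\<zeta> - 1\<bar> = \<bar>s\<^sup>2 - E\<bar> / E" using Epos by simp
    also have "\<dots> \<le> (5/4) / E" using E1 Epos by (intro divide_right_mono) auto
    also have "\<dots> \<le> (5/4) / s\<^sup>2" using E1 s0 by (intro div_le_aux) auto
    finally show ?thesis using hsq by simp
  qed
  have z2: "\<bar>\<zeta>\<^sup>2 - 1\<bar> \<le> 5/2 * h\<^sup>2"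
  proof -
    have "\<zeta>\<^sup>2 - 1 = (\<zeta> - 1) * (\<zeta> + 1)" by (simp add: algebra_simps power2_eq_square)
    hence "\<bar>\<zeta>\<^sup>2 - 1\<bar> = \<bar>\<zeta> - 1\<bar> * (\<zeta> + 1)" using z0 by (simp add: abs_mult)
    also have "\<dots> \<le> (5/4 * h\<^sup>2) * 2" using z0 z1 by (intro mult_mono) auto
    finally show ?thesis by simp
  qed
  have ub: "\<bar>u\<bar> \<le> \<bar>x\<bar> * h"
  proof -
    have "\<bar>u\<bar> = \<bar>x\<bar> * h * \<zeta>" using uz z0 h0 by (simp add: abs_mult)
    also have "\<dots> \<le> \<bar>x\<bar> * h * 1" using z0 h0 by (intro mult_left_mono) auto
    finally show ?thesis by simp
  qed
  have vb: "\<bar>v\<bar> \<le> 2 * \<bar>x\<bar> * h^3"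
  proof -
    have F4: "F \<ge> 4/5 * s^4"
    proof -
      have "s\<^sup>2 * E \<ge> s\<^sup>2 * s\<^sup>2" using E1 s0 by (intro mult_left_mono) auto
      thus ?thesis using Fbig by (simp add: power2_eq_square power4_eq_xxxx)
    qed
    have s4p: "4/5 * s^4 > 0" using s0 by simp
    have "\<bar>v\<bar> = s * \<bar>x\<bar> / F" using F0 s0 by (simp add: v_def y_def abs_mult)
    also have "\<dots> \<le> s * \<bar>x\<bar> / (4/5 * s^4)" using F4 s4p s0 by (intro div_le_aux) auto
    also have "\<dots> = 5/4 * \<bar>x\<bar> * h^3" using s0 by (simp add: h_def field_simps power4_eq_xxxx power3_eq_cube)
    also have "\<dots> \<le> 2 * \<bar>x\<bar> * h^3" using h0 by (intro mult_right_mono) auto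
    finally show ?thesis .
  qed
  have vb1: "\<bar>v\<bar> \<le> \<bar>x\<bar> * h"
  proof -
    have "h^3 \<le> h * (1/2)"
    proof -
      have "h * h \<le> h * 1" using h0 h1 by (intro mult_left_mono) auto
      hence "h\<^sup>2 \<le> 1/2" using hs by (simp add: power2_eq_square)
      hence "h * h\<^sup>2 \<le> h * (1/2)" using h0 by (intro mult_left_mono) auto
      thus ?thesis by (simp add: power2_eq_square power3_eq_cube)
    qed
    hence "2 * \<bar>x\<bar> * h^3 \<le> 2 * \<bar>x\<bar> * (h * (1/2))" by (intro mult_left_mono) auto
    thus ?thesis using vb by simp
  qed
  have uh: "\<bar>u\<bar> \<le> 1/2" "\<bar>v\<bar> \<le> 1/2" using ub vb1 xh by linarith+
  have ay: "\<bar>y\<bar> = s * \<bar>x\<bar>" using s0 by (simp add: y_def abs_mult)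
  define W where "W = X^4 * h^2"
  have mX: "X^i * h^j \<le> W" if "i \<le> 4" "2 \<le> j" for i j
    unfolding W_def using mono_Xh[OF X1 h0' h1 that] .
  have W0: "W \<ge> 0" unfolding W_def using X1 h0 by simp
  have xp: "\<bar>x\<bar>^k \<le> X^k" for k using xX by (intro power_mono) auto
  have T1: "\<bar>u/2 - x*h/2\<bar> \<le> W"
  proof -
    have eq: "u/2 - x*h/2 = (x * (h * (\<zeta> - 1))) / 2" by (simp add: uz algebra_simps)
    have "\<bar>h * (\<zeta> - 1)\<bar> \<le> h * (5/4 * h\<^sup>2)" by (rule abs_mult_le) (use h0 z1 in auto)
    hence b1: "\<bar>x * (h * (\<zeta> - 1))\<bar> \<le> X * (h * (5/4 * h\<^sup>2))" by (rule abs_mult_le[OF xX])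
    have b2: "X * (h * (5/4 * h\<^sup>2)) = 5/4 * (X^1 * h^3)" by (simp add: power2_eq_square power3_eq_cube)
    have b3: "X^1 * h^3 \<le> W" by (rule mX) auto
    have b4: "\<bar>(x * (h * (\<zeta> - 1))) / 2\<bar> = \<bar>x * (h * (\<zeta> - 1))\<bar> / 2" by simp
    show ?thesis unfolding eq b4 using b1 b2 b3 W0 by linarith
  qed
  have T2: "\<bar>y * u\<^sup>2 / 6 - x^3 * h / 6\<bar> \<le> W"
  proof -
    have "y * u\<^sup>2 = (s * h) * (x^3 * h * \<zeta>\<^sup>2)" by (simp add: uz y_def power2_eq_square power3_eq_cube algebra_simps)
    hence yu: "y * u\<^sup>2 = x^3 * h * \<zeta>\<^sup>2" using sh by simp
    have eq: "y * u\<^sup>2 / 6 - x^3 * h / 6 = (x^3 * (h * (\<zeta>\<^sup>2 - 1))) / 6" by (simp add: yu algebra_simps)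
    have "\<bar>h * (\<zeta>\<^sup>2 - 1)\<bar> \<le> h * (5/2 * h\<^sup>2)" by (rule abs_mult_le) (use h0 z2 in auto)
    moreover have "\<bar>x^3\<bar> \<le> X^3" using xp[of 3] by (simp add: power_abs)
    ultimately have b1: "\<bar>x^3 * (h * (\<zeta>\<^sup>2 - 1))\<bar> \<le> X^3 * (h * (5/2 * h\<^sup>2))" by (rule abs_mult_le[rotated])
    have b2: "X^3 * (h * (5/2 * h\<^sup>2)) = 5/2 * (X^3 * h^3)" by (simp add: power2_eq_square power3_eq_cube)
    have b3: "X^3 * h^3 \<le> W" by (rule mX) auto
    have b4: "\<bar>(x^3 * (h * (\<zeta>\<^sup>2 - 1))) / 6\<bar> = \<bar>x^3 * (h * (\<zeta>\<^sup>2 - 1))\<bar> / 6" by simp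
    show ?thesis unfolding eq b4 using b1 b2 b3 W0 by linarith
  qed
  have T3: "\<bar>y * v\<^sup>2 / 6\<bar> \<le> W"
  proof -
    have "\<bar>y * v\<^sup>2\<bar> = (s * \<bar>x\<bar>) * \<bar>v\<bar>\<^sup>2" using ay by (simp add: abs_mult)
    also have "\<dots> \<le> (s * \<bar>x\<bar>) * (2 * \<bar>x\<bar> * h^3)\<^sup>2"
      using s0 vb by (intro mult_left_mono power_mono) auto
    also have "\<dots> = 4 * (s * h) * (\<bar>x\<bar>^3 * h^5)" by (simp add: power2_eq_square power3_eq_cube algebra_simps eval_nat_numeral)
    also have "\<dots> = 4 * (\<bar>x\<bar>^3 * h^5)" using sh by simp
    also have "\<dots> \<le> 4 * (X^3 * h^5)" using xp[of 3] h0 by (intro mult_left_mono mult_right_mono) auto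
    also have "\<dots> \<le> 4 * W" using mX[of 3 5] by simp
    finally show ?thesis by simp
  qed
  have T4: "\<bar>y * (u^3 + v^3) / 3\<bar> \<le> W"
  proof -
    have "\<bar>u^3 + v^3\<bar> \<le> \<bar>u\<bar>^3 + \<bar>v\<bar>^3" by (metis abs_triangle_ineq power_abs)
    also have "\<dots> \<le> (\<bar>x\<bar> * h)^3 + (\<bar>x\<bar> * h)^3" using ub vb1 by (intro add_mono power_mono) auto
    finally have a: "\<bar>u^3 + v^3\<bar> \<le> 2 * (\<bar>x\<bar> * h)^3" by simp
    have "\<bar>y * (u^3 + v^3)\<bar> = (s * \<bar>x\<bar>) * \<bar>u^3 + v^3\<bar>" using ay by (simp add: abs_mult)
    also have "\<dots> \<le> (s * \<bar>x\<bar>) * (2 * (\<bar>x\<bar> * h)^3)" using s0 a by (intro mult_left_mono) auto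
    also have "\<dots> = 2 * (s * h) * (\<bar>x\<bar>^4 * h^2)" by (simp add: power2_eq_square power3_eq_cube algebra_simps eval_nat_numeral)
    also have "\<dots> = 2 * (\<bar>x\<bar>^4 * h^2)" using sh by simp
    also have "\<dots> \<le> 2 * (X^4 * h^2)" using xp[of 4] h0 by (intro mult_left_mono mult_right_mono) auto
    finally show ?thesis unfolding W_def by simp
  qed
  have T5: "\<bar>E * (1 - u) * e1\<bar> \<le> 3 * W"
  proof -
    have "\<bar>e1\<bar> \<le> 2 * (-u)^4" using ln_bound3[of "-u"] uh unfolding e1_def l1_def by (simp add: power2_eq_square power3_eq_cube)
    hence e: "\<bar>e1\<bar> \<le> 2 * \<bar>u\<bar>^4" by (simp add: power_abs[symmetric] power_even_abs_numeral)
    have "\<bar>E * (1 - u) * e1\<bar> = E * \<bar>1 - u\<bar> * \<bar>e1\<bar>" using Epos by (simp add: abs_mult)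
    also have "\<dots> \<le> E * (3/2) * (2 * \<bar>u\<bar>^4)" using Epos uh e by (intro mult_mono) auto
    also have "\<dots> = 3 * (E * \<bar>u\<bar>) * \<bar>u\<bar>^3" by (simp add: eval_nat_numeral)
    also have "E * \<bar>u\<bar> = s * \<bar>x\<bar>" using Eu ay Epos by (metis abs_mult abs_of_pos)
    also have "3 * (s * \<bar>x\<bar>) * \<bar>u\<bar>^3 \<le> 3 * (s * \<bar>x\<bar>) * (\<bar>x\<bar> * h)^3" using ub s0 by (intro mult_left_mono power_mono) auto
    also have "\<dots> = 3 * (s * h) * (\<bar>x\<bar>^4 * h^2)" by (simp add: power2_eq_square power3_eq_cube algebra_simps eval_nat_numeral)
    also have "\<dots> \<le> 3 * (X^4 * h^2)" using sh xp[of 4] h0 by (simp add: mult_right_mono)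
    finally show ?thesis unfolding W_def .
  qed
  have T6: "\<bar>F * (1 + v) * e2\<bar> \<le> 3 * W"
  proof -
    have "\<bar>e2\<bar> \<le> 2 * v^4" using ln_bound3[of "v"] uh unfolding e2_def l2_def by simp
    hence e: "\<bar>e2\<bar> \<le> 2 * \<bar>v\<bar>^4" by (simp add: power_abs[symmetric] power_even_abs_numeral)
    have "\<bar>F * (1 + v) * e2\<bar> = F * \<bar>1 + v\<bar> * \<bar>e2\<bar>" using F0 by (simp add: abs_mult)
    also have "\<dots> \<le> F * (3/2) * (2 * \<bar>v\<bar>^4)" using F0 uh e by (intro mult_mono) auto
    also have "\<dots> = 3 * (F * \<bar>v\<bar>) * \<bar>v\<bar>^3" by (simp add: eval_nat_numeral)
    also have "F * \<bar>v\<bar> = s * \<bar>x\<bar>" using Fv ay F0 by (metis abs_mult abs_of_pos)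
    also have "3 * (s * \<bar>x\<bar>) * \<bar>v\<bar>^3 \<le> 3 * (s * \<bar>x\<bar>) * (\<bar>x\<bar> * h)^3" using vb1 s0 by (intro mult_left_mono power_mono) auto
    also have "\<dots> = 3 * (s * h) * (\<bar>x\<bar>^4 * h^2)" by (simp add: power2_eq_square power3_eq_cube algebra_simps eval_nat_numeral)
    also have "\<dots> \<le> 3 * (X^4 * h^2)" using sh xp[of 4] h0 by (simp add: mult_right_mono)
    finally show ?thesis unfolding W_def .
  qed
  have T7: "\<bar>e3 / 2\<bar> \<le> W"
  proof -
    have "\<bar>e3\<bar> \<le> 2 * (-u)\<^sup>2" using ln_bound1[of "-u"] uh unfolding e3_def l1_def by simp
    also have "\<dots> = 2 * \<bar>u\<bar>\<^sup>2" by simp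
    also have "\<dots> \<le> 2 * (\<bar>x\<bar> * h)\<^sup>2" using ub by (intro mult_left_mono power_mono) auto
    also have "\<dots> = 2 * (\<bar>x\<bar>^2 * h^2)" by (simp add: power_mult_distrib)
    also have "\<dots> \<le> 2 * (X^2 * h^2)" using xp[of 2] h0 by (intro mult_left_mono mult_right_mono) auto
    also have "\<dots> \<le> 2 * W" using mX[of 2 2] by simp
    finally show ?thesis by simp
  qed
  have T8: "\<bar>v / 2\<bar> \<le> W"
  proof -
    have "\<bar>v\<bar> \<le> 2 * (\<bar>x\<bar> * h^3)" using vb by simp
    also have "\<dots> \<le> 2 * (X^1 * h^3)" using xX h0 by (intro mult_left_mono mult_right_mono) auto
    also have "\<dots> \<le> 2 * W" using mX[of 1 3] by simp
    finally show ?thesis by simp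
  qed
  have T9: "\<bar>e4 / 2\<bar> \<le> W"
  proof -
    have "\<bar>e4\<bar> \<le> 2 * v\<^sup>2" using ln_bound1[of "v"] uh unfolding e4_def l2_def by simp
    also have "\<dots> = 2 * \<bar>v\<bar>\<^sup>2" by simp
    also have "\<dots> \<le> 2 * (\<bar>x\<bar> * h)\<^sup>2" using vb1 by (intro mult_left_mono power_mono) auto
    also have "\<dots> = 2 * (\<bar>x\<bar>^2 * h^2)" by (simp add: power_mult_distrib)
    also have "\<dots> \<le> 2 * (X^2 * h^2)" using xp[of 2] h0 by (intro mult_left_mono mult_right_mono) auto
    also have "\<dots> \<le> 2 * W" using mX[of 2 2] by simp
    finally show ?thesis by simp
  qed
  have T10: "\<bar>\<rho>\<bar> \<le> 8 * W"
  proof -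
    have "\<bar>\<rho>\<bar> \<le> 8 * (X^0 * h^2)" using rho hsq by simp
    also have "\<dots> \<le> 8 * W" using mX[of 0 2] by simp
    finally show ?thesis .
  qed
  have Rb: "\<bar>R\<bar> \<le> 30 * W"
    using T1 T2 T3 T4 T5 T6 T7 T8 T9 T10 W0 unfolding ident abs_le_iff by linarith
  moreover have "W = (1 + \<bar>x\<bar>)^4 / s\<^sup>2" unfolding W_def X_def using hsq by simp
  ultimately show ?thesis using b by auto
qed



lemma X8_le: fixes x :: real shows "(1 + \<bar>x\<bar>)^8 \<le> 256 * (1 + x^8)"
proof (cases "\<bar>x\<bar> \<le> 1")
  case True
  have "(1 + \<bar>x\<bar>)^8 \<le> 2^8" by (rule power_mono) (use True in auto)
  moreover have "x^8 \<ge> 0" by (simp add: zero_le_even_power)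
  moreover have "(2::real)^8 = 256" by simp
  moreover have "256*(1+x^8) = 256 + 256*x^8" by simp
  ultimately show ?thesis by linarith
next
  case False
  have "(1 + \<bar>x\<bar>)^8 \<le> (2 * \<bar>x\<bar>)^8" by (rule power_mono) (use False in auto)
  also have "\<dots> = 256 * x^8" by (simp add: power_mult_distrib power_even_abs_numeral)
  finally show ?thesis by simp
qed

lemma gauss_bound: fixes x :: real shows "(1 + \<bar>x\<bar>)^8 * exp (- x\<^sup>2 / 4) \<le> 256 * 6145"
proof -
  define y where "y = x\<^sup>2 / 4"
  have y0: "y \<ge> 0" by (simp add: y_def)
  have x8: "x^8 = 256 * y^4" by (simp add: y_def power_mult_distrib power_divide flip: power_mult)
  have ey: "y^4 / fact 4 \<le> exp y" by (rule exp_pow_le[OF y0])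
  hence "y^4 \<le> 24 * exp y" by (simp add: fact_numeral field_simps)
  hence "x^8 * exp (- y) \<le> 256 * 24 * exp y * exp (- y)" unfolding x8 by (simp add: mult_right_mono)
  also have "\<dots> = 6144" by (simp add: exp_minus)
  finally have a: "x^8 * exp (- y) \<le> 6144" .
  have "(1 + \<bar>x\<bar>)^8 * exp (- y) \<le> 256 * (1 + x^8) * exp (- y)" using X8_le[of x] by (simp add: mult_right_mono)
  also have "\<dots> = 256 * (exp (- y) + x^8 * exp (- y))" by (simp add: algebra_simps)
  also have "\<dots> \<le> 256 * (1 + 6144)" using a y0 by (intro mult_left_mono add_mono) auto
  finally show ?thesis by (simp add: y_def)
qed

lemma tail_exp:
  fixes s x :: real assumes s: "s \<ge> 256" and X: "(1 + \<bar>x\<bar>)^8 > s"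
  shows "exp (- x\<^sup>2 / 8) \<le> (256^3 * 8^12 * fact 12) / s^3"
proof -
  have x1: "\<bar>x\<bar> \<ge> 1"
  proof (rule ccontr)
    assume "\<not> \<bar>x\<bar> \<ge> 1"
    hence "(1 + \<bar>x\<bar>)^8 \<le> 2^8" by (intro power_mono) auto
    thus False using X s by simp
  qed
  have "(1 + \<bar>x\<bar>)^8 \<le> (2 * \<bar>x\<bar>)^8" by (rule power_mono) (use x1 in auto)
  also have "\<dots> = 256 * x^8" by (simp add: power_mult_distrib power_even_abs_numeral)
  finally have sx: "s / 256 \<le> x^8" using X by simp
  define y where "y = x\<^sup>2 / 8"
  have y0: "y \<ge> 0" by (simp add: y_def)
  have "y^12 / fact 12 \<le> exp y" by (rule exp_pow_le[OF y0])
  moreover have "y^12 = (x^8)^3 / 8^12" by (simp add: y_def power_divide flip: power_mult)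
  moreover have "(s/256)^3 \<le> (x^8)^3" using sx s by (intro power_mono) auto
  ultimately have "(s/256)^3 / 8^12 / fact 12 \<le> exp y"
    by (smt (verit) divide_right_mono fact_gt_zero zero_less_power)
  hence "s^3 \<le> exp y * (256^3 * 8^12 * fact 12)" by (simp add: field_simps power_divide)
  hence "s^3 * exp (- y) \<le> 256^3 * 8^12 * fact 12" by (simp add: exp_minus field_simps)
  thus ?thesis using s by (simp add: y_def field_simps)
qed

lemma hlow:
  fixes w :: real assumes w: "\<bar>w\<bar> \<le> 1/4"
  shows "(1 + w) * ln (1 + w) - w \<ge> w\<^sup>2 / 4"
proof -
  define e where "e = ln (1 + w) - (w - w\<^sup>2/2 + w^3/3)"
  have e: "\<bar>e\<bar> \<le> 2 * w^4" unfolding e_def by (rule ln_bound3) (use w in simp)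
  have id: "(1 + w) * ln (1 + w) - w = w\<^sup>2/2 - w^3/6 + w^4/3 + (1 + w) * e"
    unfolding e_def by (simp add: field_simps power2_eq_square power3_eq_cube power4_eq_xxxx)
  have w3: "\<bar>w^3\<bar> \<le> w\<^sup>2 / 4"
  proof -
    have "\<bar>w^3\<bar> = \<bar>w\<bar> * w\<^sup>2" by (simp add: power2_eq_square power3_eq_cube abs_mult)
    also have "\<dots> \<le> (1/4) * w\<^sup>2" using w by (intro mult_right_mono) auto
    finally show ?thesis by simp
  qed
  have w4: "w^4 \<le> w\<^sup>2 / 16"
  proof -
    have "w^4 = w\<^sup>2 * w\<^sup>2" by (simp add: power4_eq_xxxx power2_eq_square)
    also have "w\<^sup>2 \<le> 1/16" using power_mono[of "\<bar>w\<bar>" "1/4" 2] w by (simp add: power2_abs power_divide)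
    hence "w\<^sup>2 * w\<^sup>2 \<le> w\<^sup>2 * (1/16)" by (intro mult_left_mono) auto
    finally show ?thesis by simp
  qed
  have w40: "w^4 \<ge> 0" by (simp add: zero_le_even_power)
  have "\<bar>(1 + w) * e\<bar> \<le> (5/4) * (2 * w^4)" by (rule abs_mult_le) (use w e in auto)
  thus ?thesis unfolding id using w3 w4 w40 by (simp add: abs_le_iff)
qed

lemma tailb:
  fixes s mu x :: real and Nn :: nat
  assumes s2: "s \<ge> 256" and mu0: "0 < mu" and mu1: "mu < 1"
    and sig: "s\<^sup>2 = real Nn * mu * (1 - mu)"
    and eps: "\<bar>real Nn * mu - s\<^sup>2 - 1\<bar> \<le> 1/4"
    and xs: "4 * (s * \<bar>x\<bar>) \<le> real Nn * mu"
    and X8: "(1 + \<bar>x\<bar>)^8 > s"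
  shows "0 \<le> binom_interp Nn mu (real Nn * mu - s * x) \<and>
         binom_interp Nn mu (real Nn * mu - s * x) \<le> 3 * (256^3 * 8^12 * fact 12) / s^3"
proof -
  define E where "E = real Nn * mu"
  define F where "F = real Nn - real Nn * mu"
  have s0: "s > 0" using s2 by simp
  have "(2::real)^2 \<le> s^2" by (rule power_mono) (use s2 in auto)
  hence s4: "s\<^sup>2 \<ge> 4" by simp
  have E1: "E \<ge> s\<^sup>2 + 3/4" "E \<le> s\<^sup>2 + 5/4" using eps unfolding abs_le_iff E_def by linarith+
  have Epos: "E > 0" using E1 s4 by simp
  have E2: "E \<le> 2 * s\<^sup>2" using E1 s4 by linarith
  have Eq: "E - s\<^sup>2 = E * mu" using sig by (simp add: E_def algebra_simps)
  have Fmu: "F * mu = s\<^sup>2" using sig by (simp add: F_def algebra_simps)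
  have Emu: "E * mu \<le> 5/4" using Eq E1 by simp
  have F0: "F > 0" using mu0 mu1 Epos by (simp add: F_def E_def zero_less_mult_iff algebra_simps) 
  have Fbig: "F * (5/4) \<ge> s\<^sup>2 * E"
  proof -
    have "F * (E * mu) = s\<^sup>2 * E" using Fmu by (simp add: algebra_simps)
    thus ?thesis using Emu F0 by (metis mult_left_mono less_imp_le)
  qed
  have FE: "F \<ge> E"
  proof -
    have "s\<^sup>2 * E \<ge> 4 * E" using s4 Epos by simp
    thus ?thesis using Fbig Epos by linarith
  qed
  obtain \<rho> where rho: "\<bar>\<rho>\<bar> \<le> 8 / s\<^sup>2" and bq:
    "binom_interp Nn mu (real Nn * mu - s * x) =
       exp (- (E - s * x + 1/2) * ln (1 - s * x / E)
            - (F + s * x + 1/2) * ln (1 + s * x / F) + \<rho>) / (s * sqrt (2 * pi))"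
    using dec[OF _ mu0 mu1 sig eps xs] s2 unfolding E_def F_def by force
  define y where "y = s * x"
  define u where "u = y / E"
  define v where "v = y / F"
  define l1 where "l1 = ln (1 - u)"
  define l2 where "l2 = ln (1 + v)"
  define Q where "Q = - (E - y + 1/2) * l1 - (F + y + 1/2) * l2"
  have bQ: "binom_interp Nn mu (real Nn * mu - s * x) = exp (Q + \<rho>) / (s * sqrt (2 * pi))"
    unfolding bq Q_def l1_def l2_def u_def v_def y_def by (simp add: algebra_simps)
  have Eu: "E * u = y" and Fv: "F * v = y" using Epos F0 by (auto simp: u_def v_def)
  have yE: "\<bar>y\<bar> \<le> E / 4" using xs s0 by (simp add: y_def E_def abs_mult)
  have ub: "\<bar>u\<bar> \<le> 1/4" using yE Epos by (simp add: u_def abs_divide field_simps)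
  have vb: "\<bar>v\<bar> \<le> 1/4"
  proof -
    have "\<bar>y\<bar> \<le> F / 4" using yE FE by linarith
    thus ?thesis using F0 by (simp add: v_def abs_divide field_simps)
  qed
  have h1: "(1 + (-u)) * ln (1 + (-u)) - (-u) \<ge> (-u)\<^sup>2 / 4" by (rule hlow) (use ub in simp)
  have h2: "(1 + v) * ln (1 + v) - v \<ge> v\<^sup>2 / 4" by (rule hlow) (use vb in simp)
  have A: "(E - y) * l1 \<ge> - y + E * u\<^sup>2 / 4"
  proof -
    have "(E - y) * l1 = E * ((1 - u) * l1)" using Eu by (simp add: algebra_simps)
    also have "\<dots> \<ge> E * (- u + u\<^sup>2 / 4)" using h1 Epos unfolding l1_def by (intro mult_left_mono) auto
    finally show ?thesis using Eu by (simp add: algebra_simps)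
  qed
  have B: "(F + y) * l2 \<ge> y"
  proof -
    have "(F + y) * l2 = F * ((1 + v) * l2)" using Fv by (simp add: algebra_simps)
    also have "\<dots> \<ge> F * (v + v\<^sup>2 / 4)" using h2 F0 unfolding l2_def by (intro mult_left_mono) auto
    also have "F * (v + v\<^sup>2 / 4) \<ge> F * v" using F0 by simp
    finally show ?thesis using Fv by simp
  qed
  have Eu2: "E * u\<^sup>2 \<ge> x\<^sup>2 / 2"
  proof -
    have "E * u\<^sup>2 = s\<^sup>2 * x\<^sup>2 / E" using Epos by (simp add: u_def y_def power2_eq_square field_simps)
    also have "s\<^sup>2 * x\<^sup>2 / E \<ge> s\<^sup>2 * x\<^sup>2 / (2 * s\<^sup>2)" using E2 Epos by (intro div_le_aux) auto
    also have "s\<^sup>2 * x\<^sup>2 / (2 * s\<^sup>2) = x\<^sup>2 / 2" using s0 by simp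
    finally show ?thesis .
  qed
  have l1b: "\<bar>l1\<bar> \<le> 1/2"
  proof -
    have "\<bar>ln (1 + (-u)) - (-u)\<bar> \<le> 2 * (-u)\<^sup>2" by (rule ln_bound1) (use ub in simp)
    moreover have "u\<^sup>2 \<le> 1/16" using power_mono[of "\<bar>u\<bar>" "1/4" 2] ub by (simp add: power2_abs power_divide)
    ultimately show ?thesis using ub unfolding l1_def by (simp add: abs_le_iff) linarith
  qed
  have l2b: "\<bar>l2\<bar> \<le> 1/2"
  proof -
    have "\<bar>ln (1 + v) - v\<bar> \<le> 2 * v\<^sup>2" by (rule ln_bound1) (use vb in simp)
    moreover have "v\<^sup>2 \<le> 1/16" using power_mono[of "\<bar>v\<bar>" "1/4" 2] vb by (simp add: power2_abs power_divide)
    ultimately show ?thesis using vb unfolding l2_def by (simp add: abs_le_iff) linarith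
  qed
  have r2: "\<rho> \<le> 1/2"
  proof -
    have "8 / s\<^sup>2 \<le> 8 / 16" using s4 s2 power_mono[of 4 s 2] by (intro div_le_aux) auto
    thus ?thesis using rho by simp
  qed
  have Qb: "Q + \<rho> \<le> 1 - x\<^sup>2 / 8"
    unfolding Q_def using A B Eu2 l1b l2b r2 by (simp add: algebra_simps abs_le_iff)
  have den: "s * sqrt (2 * pi) \<ge> 1"
  proof -
    have "sqrt (2 * pi) \<ge> 1" using pi_gt3 by simp
    thus ?thesis using s2 by (metis mult_mono one_le_numeral order.trans less_imp_le s0 mult_1_left zero_le_one order_trans[of 1 256 s] numeral_le_iff)
  qed
  have "exp (Q + \<rho>) / (s * sqrt (2 * pi)) \<le> exp (Q + \<rho>)"
    using den by (simp add: divide_le_eq order_trans[OF _ mult_left_mono[OF den]] )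
  also have "\<dots> \<le> exp (1 - x\<^sup>2 / 8)" using Qb by simp
  also have "\<dots> = exp 1 * exp (- x\<^sup>2 / 8)" by (subst exp_add[symmetric]) simp
  also have "\<dots> \<le> 3 * ((256^3 * 8^12 * fact 12) / s^3)"
    using tail_exp[OF s2 X8] exp_le by (intro mult_mono) auto
  finally show ?thesis unfolding bQ using den by (simp add: mult.assoc)
qed



lemma sq_sum_le: "(a + b)\<^sup>2 \<le> 2 * a\<^sup>2 + 2 * (b::real)\<^sup>2"
proof -
  have "0 \<le> (a - b)\<^sup>2" by simp
  thus ?thesis by (simp add: power2_eq_square algebra_simps)
qed

lemma moddiff:
  fixes s mu x :: real and Nn :: nat
  assumes s2: "s \<ge> 256" and mu0: "0 < mu" and mu1: "mu < 1"
    and sig: "s\<^sup>2 = real Nn * mu * (1 - mu)"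
    and eps: "\<bar>real Nn * mu - s\<^sup>2 - 1\<bar> \<le> 1/4"
    and X8: "(1 + \<bar>x\<bar>)^8 \<le> s"
  shows "\<bar>binom_interp Nn mu (real Nn * mu - s * x) - binom_interp Nn mu (real Nn * mu - s * (- x))
           - (1 / (3 * sqrt (2 * pi)) * x * (3 - x\<^sup>2) * exp (- x\<^sup>2 / 2)) / s\<^sup>2\<bar>
         \<le> 10872 * (256 * 6145) / s^3"
proof -
  define X where "X = 1 + \<bar>x\<bar>"
  define a where "a = x/2 - x^3/6"
  define K0 where "K0 = exp (- x\<^sup>2 / 2) / (s * sqrt (2 * pi))"
  define Y where "Y = X^8 / s\<^sup>2"
  have s0: "s > 0" using s2 by simp
  have X1: "X \<ge> 1" and xX: "\<bar>x\<bar> \<le> X" by (auto simp: X_def)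
  have s16: "s \<ge> 16" using s2 by simp
  obtain R1 where R1: "\<bar>R1\<bar> \<le> 30 * X^4 / s\<^sup>2" and b1:
     "binom_interp Nn mu (real Nn * mu - s * x) = exp (- x\<^sup>2 / 2) * exp (a / s + R1) / (s * sqrt (2 * pi))"
    using modr[OF s16 mu0 mu1 sig eps X8] unfolding X_def a_def by blast
  obtain R2 where R2: "\<bar>R2\<bar> \<le> 30 * X^4 / s\<^sup>2" and b2':
     "binom_interp Nn mu (real Nn * mu - s * (-x)) = exp (- (-x)\<^sup>2 / 2) * exp (((-x)/2 - (-x)^3/6) / s + R2) / (s * sqrt (2 * pi))"
    using modr[OF s16 mu0 mu1 sig eps, of "-x"] X8 unfolding X_def by auto
  have b2: "binom_interp Nn mu (real Nn * mu - s * (-x)) = K0 * exp (- a / s + R2)"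
  proof -
    have na: "(-x)/2 - (-x)^3/6 = - a" unfolding a_def by simp
    show ?thesis unfolding b2' K0_def na by simp
  qed
  have b1': "binom_interp Nn mu (real Nn * mu - s * x) = K0 * exp (a / s + R1)"
    unfolding b1 K0_def by simp
  have f: "(1 / (3 * sqrt (2 * pi)) * x * (3 - x\<^sup>2) * exp (- x\<^sup>2 / 2)) / s\<^sup>2 = K0 * (2 * a / s)"
    unfolding K0_def a_def using s0 by (simp add: field_simps power2_eq_square power3_eq_cube)
  define p1 where "p1 = a / s + R1"
  define p2 where "p2 = - a / s + R2"
  define D where "D = (exp p1 - 1 - p1) - (exp p2 - 1 - p2) + R1 - R2"
  have eqD: "binom_interp Nn mu (real Nn * mu - s * x) - binom_interp Nn mu (real Nn * mu - s * (- x))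
           - (1 / (3 * sqrt (2 * pi)) * x * (3 - x\<^sup>2) * exp (- x\<^sup>2 / 2)) / s\<^sup>2 = K0 * D"
    unfolding b1' b2 f D_def p1_def p2_def by (simp add: algebra_simps)
  have X8s: "X^8 \<le> s" using X8 by (simp add: X_def)
  have Xi: "X^i \<le> X^8" if "i \<le> 8" for i using X1 that by (intro power_increasing) auto
  have X3: "X^3 \<le> s / 16"
  proof -
    have "(X^3)\<^sup>2 = X^6" by (simp flip: power_mult)
    also have "\<dots> \<le> s" using Xi[of 6] X8s by simp
    also have "s \<le> (s/16)\<^sup>2" using s2 by (simp add: power2_eq_square field_simps) 
    finally have "(X^3)\<^sup>2 \<le> (s/16)\<^sup>2" .
    thus ?thesis by (rule power2_le_imp_le) (use s0 in auto)
  qed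
  have ab: "\<bar>a\<bar> \<le> X^3"
  proof -
    have "\<bar>x\<bar>^3 \<le> X^3" using xX by (intro power_mono) auto
    moreover have "\<bar>x\<bar> \<le> X^3" using xX Xi[of 1] X1 by (metis power_increasing one_le_numeral order_trans power_one_right)
    moreover have "\<bar>a\<bar> \<le> \<bar>x/2\<bar> + \<bar>x^3/6\<bar>" unfolding a_def by (rule abs_triangle_ineq4)
    moreover have "\<bar>x^3/6\<bar> = \<bar>x\<bar>^3/6" by (simp add: power_abs)
    moreover have "\<bar>x/2\<bar> = \<bar>x\<bar>/2" by simp
    ultimately show ?thesis by linarith
  qed
  have Y0: "Y \<ge> 0" unfolding Y_def using X1 by simp
  have as: "\<bar>a / s\<bar> \<le> 1/16" using ab X3 s0 by (simp add: abs_divide field_simps)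
  have as2: "(a / s)\<^sup>2 \<le> Y"
  proof -
    have "(a/s)\<^sup>2 = a\<^sup>2 / s\<^sup>2" by (simp add: power_divide)
    also have "a\<^sup>2 \<le> (X^3)\<^sup>2" using power_mono[OF ab, of 2] by simp
    also have "(X^3)\<^sup>2 = X^6" by (simp flip: power_mult)
    also have "X^6 \<le> X^8" using Xi[of 6] by simp
    finally show ?thesis unfolding Y_def using s0 by (simp add: divide_right_mono)
  qed
  have Rb: "\<bar>R\<bar> \<le> 30 * Y" "\<bar>R\<bar> \<le> 1/8" "R\<^sup>2 \<le> 900 * Y" if R: "\<bar>R\<bar> \<le> 30 * X^4 / s\<^sup>2" for R
  proof -
    have "30 * X^4 / s\<^sup>2 \<le> 30 * X^8 / s\<^sup>2" using Xi[of 4] s0 by (simp add: divide_right_mono)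
    thus r1: "\<bar>R\<bar> \<le> 30 * Y" using R unfolding Y_def by simp
    have "30 * X^4 / s\<^sup>2 \<le> 30 * s / s\<^sup>2" using Xi[of 4] X8s s0 by (simp add: divide_right_mono)
    also have "\<dots> = 30 / s" using s0 by (simp add: power2_eq_square)
    also have "\<dots> \<le> 30 / 256" using s2 by (intro div_le_aux) auto
    finally show "\<bar>R\<bar> \<le> 1/8" using R by simp
    have ss: "1 \<le> s * s" using mult_mono[of 1 s 1 s] s2 by simp
    have "R\<^sup>2 \<le> (30 * X^4 / s\<^sup>2)\<^sup>2" using R by (simp add: power2_le_iff_abs_le)
    also have "\<dots> = 900 * (X^8 / s\<^sup>2) * (1 / s\<^sup>2)" by (simp add: power2_eq_square power_mult_distrib field_simps flip: power_add)
    also have "\<dots> \<le> 900 * (X^8 / s\<^sup>2) * 1" using ss Y0 unfolding Y_def[symmetric]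
      by (intro mult_left_mono) (auto simp: power2_eq_square field_simps)
    finally show "R\<^sup>2 \<le> 900 * Y" unfolding Y_def by simp
  qed
  have pb: "\<bar>p\<bar> \<le> 1 \<and> p\<^sup>2 \<le> 1802 * Y" if "p = c + R" "\<bar>c\<bar> \<le> 1/16" "c\<^sup>2 \<le> Y" "\<bar>R\<bar> \<le> 30 * X^4 / s\<^sup>2" for p c R
  proof
    show "\<bar>p\<bar> \<le> 1" using that Rb[OF that(4)] by linarith
    have "p\<^sup>2 \<le> 2 * c\<^sup>2 + 2 * R\<^sup>2" unfolding that(1) by (rule sq_sum_le)
    thus "p\<^sup>2 \<le> 1802 * Y" using that Rb[OF that(4)] by linarith
  qed
  have p1b: "\<bar>p1\<bar> \<le> 1 \<and> p1\<^sup>2 \<le> 1802 * Y" by (rule pb[OF p1_def as as2 R1])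
  have p2b: "\<bar>p2\<bar> \<le> 1 \<and> p2\<^sup>2 \<le> 1802 * Y"
    by (rule pb[of p2 "- a / s" R2]) (use p2_def as as2 R2 in auto)
  have Db: "\<bar>D\<bar> \<le> 10872 * Y"
  proof -
    have "\<bar>exp p1 - 1 - p1\<bar> \<le> 3 * p1\<^sup>2" using exp_quad p1b by blast
    moreover have "\<bar>exp p2 - 1 - p2\<bar> \<le> 3 * p2\<^sup>2" using exp_quad p2b by blast
    ultimately show ?thesis unfolding D_def using p1b p2b Rb(1)[OF R1] Rb(1)[OF R2] Y0
      by (simp add: abs_le_iff)
  qed
  have "\<bar>K0 * D\<bar> = K0 * \<bar>D\<bar>" unfolding K0_def using s0 by (simp add: abs_mult)
  also have "\<dots> \<le> K0 * (10872 * Y)" using Db s0 by (intro mult_left_mono) (auto simp: K0_def)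
  also have "\<dots> = 10872 * (X^8 * exp (- x\<^sup>2 / 2)) / (sqrt (2 * pi) * s^3)"
    unfolding K0_def Y_def using s0 by (simp add: field_simps power2_eq_square power3_eq_cube)
  also have "\<dots> \<le> 10872 * (256 * 6145) / (1 * s^3)"
  proof (intro frac_le mult_left_mono)
    have "exp (- x\<^sup>2 / 2) \<le> exp (- x\<^sup>2 / 4)" by simp
    hence "X^8 * exp (- x\<^sup>2 / 2) \<le> X^8 * exp (- x\<^sup>2 / 4)" using X1 by (intro mult_left_mono) auto
    also have "\<dots> \<le> 256 * 6145" using gauss_bound[of x] unfolding X_def .
    finally show "X^8 * exp (- x\<^sup>2 / 2) \<le> 256 * 6145" .
    show "1 * s^3 \<le> sqrt (2 * pi) * s^3" using pi_gt3 s0 by (intro mult_right_mono) auto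
  qed (use s0 in auto)
  finally show ?thesis unfolding eqD by simp
qed



lemma tailcase:
  fixes s mu x :: real and Nn :: nat
  assumes s2: "s \<ge> 256" and mu0: "0 < mu" and mu1: "mu < 1"
    and sig: "s\<^sup>2 = real Nn * mu * (1 - mu)"
    and eps: "\<bar>real Nn * mu - s\<^sup>2 - 1\<bar> \<le> 1/4"
    and xs4: "\<bar>x\<bar> \<le> s / 4"
    and X8: "(1 + \<bar>x\<bar>)^8 > s"
  shows "\<bar>binom_interp Nn mu (real Nn * mu - s * x) - binom_interp Nn mu (real Nn * mu - s * (- x))
           - (1 / (3 * sqrt (2 * pi)) * x * (3 - x\<^sup>2) * exp (- x\<^sup>2 / 2)) / s\<^sup>2\<bar>
         \<le> (6 * (256^3 * 8^12 * fact 12) + 3 * (256 * 6145) * (256^3 * 8^12 * fact 12)) / s^3"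
proof -
  define CT where "CT = (256^3 * 8^12 * fact 12 :: real)"
  define X where "X = 1 + \<bar>x\<bar>"
  have s0: "s > 0" using s2 by simp
  have CT0: "CT \<ge> 0" by (simp add: CT_def)
  have xs: "4 * (s * \<bar>x\<bar>) \<le> real Nn * mu"
  proof -
    have "4 * (s * \<bar>x\<bar>) \<le> s * s" using xs4 s0 by (simp add: mult_left_mono)
    also have "\<dots> \<le> real Nn * mu" using eps unfolding abs_le_iff by (simp add: power2_eq_square)
    finally show ?thesis .
  qed
  have xs': "4 * (s * \<bar>-x\<bar>) \<le> real Nn * mu" using xs by simp
  have X8': "(1 + \<bar>-x\<bar>)^8 > s" using X8 by simp
  note t1 = tailb[OF s2 mu0 mu1 sig eps xs X8]
  note t2 = tailb[OF s2 mu0 mu1 sig eps xs' X8']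
  have fb: "\<bar>(1 / (3 * sqrt (2 * pi)) * x * (3 - x\<^sup>2) * exp (- x\<^sup>2 / 2)) / s\<^sup>2\<bar> \<le> 3 * (256 * 6145) * CT / s^3"
  proof -
    have sq: "sqrt (2 * pi) \<ge> 1" using pi_gt3 by simp
    have X1: "X \<ge> 1" by (simp add: X_def)
    have p1: "\<bar>x * (3 - x\<^sup>2)\<bar> \<le> 3 * X^8"
    proof -
      have "\<bar>x * (3 - x\<^sup>2)\<bar> = \<bar>x\<bar> * \<bar>3 - x\<^sup>2\<bar>" by (simp add: abs_mult)
      also have "\<dots> \<le> X * (3 * X\<^sup>2)"
      proof (rule mult_mono)
        show "\<bar>x\<bar> \<le> X" by (simp add: X_def)
        have "\<bar>x\<bar>\<^sup>2 \<le> X\<^sup>2" by (rule power_mono) (simp_all add: X_def)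
        hence "x\<^sup>2 \<le> X\<^sup>2" by simp
        moreover have "1 \<le> X\<^sup>2" using X1 by (simp add: one_le_power)
        ultimately show "\<bar>3 - x\<^sup>2\<bar> \<le> 3 * X\<^sup>2" using zero_le_power2[of x] unfolding abs_le_iff by linarith
      qed (use X1 in auto)
      also have "\<dots> = 3 * X^3" by (simp add: power2_eq_square power3_eq_cube)
      also have "\<dots> \<le> 3 * X^8" using X1 by (simp add: power_increasing)
      finally show ?thesis .
    qed
    have e: "exp (- x\<^sup>2 / 2) = exp (- x\<^sup>2 / 4) * exp (- x\<^sup>2 / 8) * exp (- x\<^sup>2 / 8)"
      by (simp add: exp_add[symmetric])
    have "\<bar>(1 / (3 * sqrt (2 * pi)) * x * (3 - x\<^sup>2) * exp (- x\<^sup>2 / 2)) / s\<^sup>2\<bar>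
          = (1 / (3 * sqrt (2 * pi))) * \<bar>x * (3 - x\<^sup>2)\<bar> * exp (- x\<^sup>2 / 2) / s\<^sup>2"
      by (simp add: abs_mult abs_divide)
    also have "\<dots> \<le> 1 * (3 * X^8) * exp (- x\<^sup>2 / 2) / 1"
    proof (intro frac_le mult_right_mono mult_mono p1)
      have h: "1 \<le> 3 * sqrt (2 * pi)" using sq by linarith
      show "1 / (3 * sqrt (2 * pi)) \<le> 1" using div_le_aux[of 1 "3 * sqrt (2 * pi)" 1] h by simp
      show "1 \<le> s\<^sup>2" using s2 by (simp add: one_le_power)
    qed (use sq in auto)
    also have "\<dots> = 3 * (X^8 * exp (- x\<^sup>2 / 4)) * exp (- x\<^sup>2 / 8) * exp (- x\<^sup>2 / 8)"
      unfolding e by simp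
    also have "\<dots> = 3 * (X^8 * exp (- x\<^sup>2 / 4)) * (exp (- x\<^sup>2 / 8) * exp (- x\<^sup>2 / 8))" by simp
    also have "\<dots> \<le> 3 * (256 * 6145) * (exp (- x\<^sup>2 / 8) * exp (- x\<^sup>2 / 8))"
      using gauss_bound[of x] by (intro mult_right_mono) (auto simp: X_def)
    also have "exp (- x\<^sup>2 / 8) * exp (- x\<^sup>2 / 8) \<le> (CT / s^3) * 1"
    proof (rule mult_mono)
      show "exp (- x\<^sup>2 / 8) \<le> CT / s^3" using tail_exp[OF s2 X8] by (simp add: CT_def)
      show "exp (- x\<^sup>2 / 8) \<le> 1" by simp
    qed (use CT0 s0 in auto)
    hence "3 * (256 * 6145) * (exp (- x\<^sup>2 / 8) * exp (- x\<^sup>2 / 8)) \<le> 3 * (256 * 6145) * ((CT / s^3) * 1)"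
      by (intro mult_left_mono) auto
    finally show ?thesis by simp
  qed
  define Q where "Q = CT / s^3"
  define B1 where "B1 = binom_interp Nn mu (real Nn * mu - s * x)"
  define B2 where "B2 = binom_interp Nn mu (real Nn * mu - s * (- x))"
  define Fv where "Fv = (1 / (3 * sqrt (2 * pi)) * x * (3 - x\<^sup>2) * exp (- x\<^sup>2 / 2)) / s\<^sup>2"
  have q3: "3 * (256^3 * 8^12 * fact 12) / s^3 = 3 * Q" by (simp add: Q_def CT_def)
  have q4: "3 * (256 * 6145) * CT / s^3 = 3 * (256 * 6145) * Q" by (simp add: Q_def)
  have u1: "0 \<le> B1" "B1 \<le> 3 * Q" using t1 unfolding B1_def q3 by auto
  have u2: "0 \<le> B2" "B2 \<le> 3 * Q" using t2 unfolding B2_def q3 by auto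
  have u3: "\<bar>Fv\<bar> \<le> 3 * (256 * 6145) * Q" using fb unfolding Fv_def q4 .
  have "\<bar>B1 - B2 - Fv\<bar> \<le> 6 * Q + 3 * (256 * 6145) * Q"
    using u1 u2 u3 unfolding abs_le_iff by linarith
  also have "\<dots> = (6 * CT + 3 * (256 * 6145) * CT) / s^3" by (simp add: Q_def field_simps)
  finally show ?thesis unfolding CT_def B1_def B2_def Fv_def .
qed



theorem corollary2p3:
  fixes \<Sigma> :: "real set" and N :: "real \<Rightarrow> nat" and mu :: "real \<Rightarrow> real" and \<alpha> :: real
  assumes pos: "\<Sigma> \<subseteq> {0<..}"
    and unbdd: "\<forall>M. \<exists>\<sigma>\<in>\<Sigma>. \<sigma> > M"
    and Npos: "\<forall>\<sigma>\<in>\<Sigma>. N \<sigma> > 0"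
    and mu01: "\<forall>\<sigma>\<in>\<Sigma>. 0 < mu \<sigma> \<and> mu \<sigma> < 1"
    and sig: "\<forall>\<sigma>\<in>\<Sigma>. \<sigma> = sqrt (real (N \<sigma>) * mu \<sigma> * (1 - mu \<sigma>))"
    and E: "\<exists>K s0. \<forall>\<sigma>\<in>\<Sigma>. \<sigma> > s0 \<longrightarrow>
              \<bar>real (N \<sigma>) * mu \<sigma> - \<sigma>\<^sup>2 - 1\<bar> \<le> K / \<sigma>\<^sup>2"
    and alpha: "\<alpha> > 0"
  shows "\<exists>C>0. \<exists>\<sigma>0. \<forall>\<sigma>\<in>\<Sigma>. \<sigma> > \<sigma>0 \<longrightarrow>
           (\<forall>x. \<bar>x\<bar> \<le> \<sigma> powr (1 - \<alpha>) \<longrightarrow>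
              \<bar>bfun N mu \<sigma> x - bfun N mu \<sigma> (- x)
                 - (1 / (3 * sqrt (2 * pi)) * x * (3 - x\<^sup>2) * exp (- x\<^sup>2 / 2)) / \<sigma>\<^sup>2\<bar>
              \<le> C / \<sigma> ^ 3)"
proof -
  obtain K s0 where KE: "\<forall>\<sigma>\<in>\<Sigma>. \<sigma> > s0 \<longrightarrow> \<bar>real (N \<sigma>) * mu \<sigma> - \<sigma>\<^sup>2 - 1\<bar> \<le> K / \<sigma>\<^sup>2"
    using E by blast
  define CT where "CT = (256^3 * 8^12 * fact 12 :: real)"
  define C where "C = 10872 * (256 * 6145) + (6 * CT + 3 * (256 * 6145) * CT)"
  define \<sigma>0 where "\<sigma>0 = max (max s0 256) (max (4 * \<bar>K\<bar>) (4 powr (1/\<alpha>)))"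
  have CT0: "CT \<ge> 0" by (simp add: CT_def)
  have C0: "C > 0" unfolding C_def using CT0 by (simp add: add_pos_nonneg)
  have main: "\<forall>\<sigma>\<in>\<Sigma>. \<sigma> > \<sigma>0 \<longrightarrow>
           (\<forall>x. \<bar>x\<bar> \<le> \<sigma> powr (1 - \<alpha>) \<longrightarrow>
              \<bar>bfun N mu \<sigma> x - bfun N mu \<sigma> (- x)
                 - (1 / (3 * sqrt (2 * pi)) * x * (3 - x\<^sup>2) * exp (- x\<^sup>2 / 2)) / \<sigma>\<^sup>2\<bar>
              \<le> C / \<sigma> ^ 3)"
  proof (intro ballI impI allI)
    fix \<sigma> x assume sS: "\<sigma> \<in> \<Sigma>" and big: "\<sigma> > \<sigma>0" and xr: "\<bar>x\<bar> \<le> \<sigma> powr (1 - \<alpha>)"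
    have s256: "\<sigma> \<ge> 256" and ss0: "\<sigma> > s0" and sK: "\<sigma> \<ge> 4 * \<bar>K\<bar>" and sa: "\<sigma> \<ge> 4 powr (1/\<alpha>)"
      using big unfolding \<sigma>0_def by auto
    have s0': "\<sigma> > 0" using s256 by simp
    have m0: "0 < mu \<sigma>" and m1: "mu \<sigma> < 1" using mu01 sS by auto
    have sig2: "\<sigma>\<^sup>2 = real (N \<sigma>) * mu \<sigma> * (1 - mu \<sigma>)"
    proof -
      have "real (N \<sigma>) * mu \<sigma> * (1 - mu \<sigma>) \<ge> 0" using m0 m1 by simp
      moreover have "\<sigma> = sqrt (real (N \<sigma>) * mu \<sigma> * (1 - mu \<sigma>))" using sig sS by auto
      ultimately show ?thesis by (metis real_sqrt_pow2)
    qed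
    have eps: "\<bar>real (N \<sigma>) * mu \<sigma> - \<sigma>\<^sup>2 - 1\<bar> \<le> 1/4"
    proof -
      have "\<bar>real (N \<sigma>) * mu \<sigma> - \<sigma>\<^sup>2 - 1\<bar> \<le> K / \<sigma>\<^sup>2" using KE sS ss0 by auto
      also have "\<dots> \<le> \<bar>K\<bar> / \<sigma>\<^sup>2" by (intro divide_right_mono) auto
      also have "\<dots> \<le> 1/4"
      proof -
        have "\<sigma> * 1 \<le> \<sigma> * \<sigma>" using s256 by (intro mult_left_mono) auto
        hence "4 * \<bar>K\<bar> \<le> \<sigma>\<^sup>2" using sK by (simp add: power2_eq_square)
        thus ?thesis using s0' by (simp add: field_simps)
      qed
      finally show ?thesis .
    qed
    have eq: "bfun N mu \<sigma> x - bfun N mu \<sigma> (- x)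
        = binom_interp (N \<sigma>) (mu \<sigma>) (real (N \<sigma>) * mu \<sigma> - \<sigma> * x) - binom_interp (N \<sigma>) (mu \<sigma>) (real (N \<sigma>) * mu \<sigma> - \<sigma> * (- x))"
      by (simp add: bfun_def)
    show "\<bar>bfun N mu \<sigma> x - bfun N mu \<sigma> (- x)
                 - (1 / (3 * sqrt (2 * pi)) * x * (3 - x\<^sup>2) * exp (- x\<^sup>2 / 2)) / \<sigma>\<^sup>2\<bar> \<le> C / \<sigma> ^ 3"
    proof (cases "(1 + \<bar>x\<bar>)^8 \<le> \<sigma>")
      case True
      have "\<bar>bfun N mu \<sigma> x - bfun N mu \<sigma> (- x)
                 - (1 / (3 * sqrt (2 * pi)) * x * (3 - x\<^sup>2) * exp (- x\<^sup>2 / 2)) / \<sigma>\<^sup>2\<bar> \<le> 10872 * (256 * 6145) / \<sigma>^3"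
        unfolding eq by (rule moddiff[OF s256 m0 m1 sig2 eps True])
      also have "\<dots> \<le> C / \<sigma>^3" unfolding C_def using CT0 s0' by (intro divide_right_mono) auto
      finally show ?thesis .
    next
      case False
      have pa: "\<sigma> powr \<alpha> \<ge> 4"
      proof -
        have "(4 powr (1/\<alpha>)) powr \<alpha> \<le> \<sigma> powr \<alpha>" using sa alpha by (intro powr_mono2) auto
        moreover have "(4 powr (1/\<alpha>)) powr \<alpha> = 4" using alpha by (simp add: powr_powr)
        ultimately show ?thesis by simp
      qed
      have x4: "\<bar>x\<bar> \<le> \<sigma> / 4"
      proof -
        have "\<sigma> powr (1 - \<alpha>) = \<sigma> / \<sigma> powr \<alpha>" using s0' by (simp add: powr_diff)
        also have "\<dots> \<le> \<sigma> / 4" using pa s0' by (intro div_le_aux) auto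
        finally show ?thesis using xr by simp
      qed
      have "\<bar>bfun N mu \<sigma> x - bfun N mu \<sigma> (- x)
                 - (1 / (3 * sqrt (2 * pi)) * x * (3 - x\<^sup>2) * exp (- x\<^sup>2 / 2)) / \<sigma>\<^sup>2\<bar>
            \<le> (6 * (256^3 * 8^12 * fact 12) + 3 * (256 * 6145) * (256^3 * 8^12 * fact 12)) / \<sigma>^3"
        unfolding eq by (rule tailcase[OF s256 m0 m1 sig2 eps x4]) (use False in simp)
      also have "\<dots> \<le> C / \<sigma>^3" unfolding C_def CT_def using s0' by (intro divide_right_mono) auto
      finally show ?thesis .
    qed
  qed
  show ?thesis using C0 main by blast
qed


end
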